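(* Let $V=(J,(V_j)_{j\in J},d,H)$ be a hypergraph system, let $(\nu_e)_{e\in H}$ be a pseudorandom system of measures on $V$, and let $e\in H$. Let $K$ be a finite set and for each $k\in K$ let $f_k:V_e\to\mathbb{R}$ satisfy $|f_k(x_e)|\le\nu_e(x_e)+1$ for all $x_e\in V_e$. Then $$\Big|\mathbb{E}\Big((\nu_e(x_e)-1)\prod_{k\in K}\mathcal{D}_ef_k(x_e)\ \Big|\ x_e\in V_e\Big)\Big|=o_{N\to\infty;K}(1),$$ where the $o$-term depends only on $|K|$ (and $J$ and the pseudorandomness constants), not on the functions $f_k$.
   Context: A hypergraph system is a quadruple $V=(J,(V_j)_{j\in J},d,H)$ where $J$ is a finite set, each $V_j$ is a finite nonempty set, $d\ge1$ is an integer and $H\subseteq\binom{J}{d}:=\{e\subseteq J:|e|=d\}$; for $e\subseteq J$ put $V_e:=\prod_{j\in e}V_j$. For a finite nonempty set $Z$ and $f:Z\to\mathbb{R}$, $\mathbb{E}(f(x)\mid x\in Z):=|Z|^{-1}\sum_{x\in Z}f(x)$; constraints written after the bar mean uniform averaging over all tuples satisfying them. All objects depend on a parameter $N$ ranging over a sequence tending to infinity while $J,d,H$ are fixed; implicit constants may depend on $J$. $o_{x\to0;y}(X)$ denotes a quantity bounded in magnitude by $c(x,y)X$ where $c(x,y)\to0$ as $x\to0$ for each fixed $y$; $O_y(X)$ a quantity bounded by $C(y)X$. Cube notation: for a finite set $e$, $\{0,1\}^e$ is the set of tuples $\omega=(\omega_j)_{j\in e}$ with $\omega_j\in\{0,1\}$,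 and $0^e$ is the all-zero tuple; for $x^{(0)}_J,x^{(1)}_J\in V_J$, $e\subseteq J$ and $\omega\in\{0,1\}^e$, set $x^{(\omega)}_e:=(x^{(\omega_j)}_j)_{j\in e}\in V_e$ and $x^{(a)}_e:=(x^{(a)}_j)_{j\in e}$ for $a\in\{0,1\}$. A system of measures is a family of functions $\nu_e:V_e\to[0,\infty)$, $e\in H$, with $\mathbb{E}(\nu_e(x_e)\mid x_e\in V_e)=1+o_{N\to\infty}(1)$. For $e\in H$ and $f:V_e\to\mathbb{R}$, the dual function is $\mathcal{D}_ef(x^{(0)}_e):=\mathbb{E}\big(\prod_{\omega\in\{0,1\}^e,\ \omega\neq 0^e}f(x^{(\omega)}_e)\mid x^{(1)}_e\in V_e\big)$. The system is pseudorandom if: (i) $\mathcal{D}_e(\nu_e+1)(x_e)=O(1)$ for all $e\in H$, $x_e\in V_e$; (ii) for every choice of exponents $n_{e,\omega}\in\{0,1\}$, $\mathbb{E}\big(\prod_{e\in H}\prod_{\omega\in\{0,1\}^e}\nu_e(x^{(\omega)}_e)^{n_{e,\omega}}\mid x^{(0)}_J,x^{(1)}_J\in V_J\big)=1+o_{N\to\infty}(1)$; (iii) for every $e\in H$, $j\in e$, every choice of $n_{e,\omega}\in\{0,1\}$ and every integer $K\ge0$, $\mathbb{E}\Big(\mathbb{E}\big(\prod_{\omega\in\{0,1\}^e}\nu_e(x^{(\omega)}_e)^{n_{e,\omega}}\mid x^{(0)}_j,x^{(1)}_j\in V_j\big)^K\ \Big|\ x^{(0)}_{e\setminus\{j\}},x^{(1)}_{e\setminus\{j\}}\in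 V_{e\setminus\{j\}}\Big)=O_K(1)$. *)

theory Defs
  imports Complex_Main "HOL-Library.FuncSet"
begin

text \<open>Objects depending on the parameter N are modelled as functions of N :: nat
  (N \<rightarrow> \<infinity> along the filter sequentially). A point of V_e is an element of
  PiE e (V N), i.e. a function on e (undefined outside e). A vertex
  \<omega> of the cube {0,1}^e is represented by the subset S \<subseteq> e of coordinates
  where \<omega>_j = 1.\<close>

definition avg :: "('a \<Rightarrow> real) \<Rightarrow> 'a set \<Rightarrow> real" where
  "avg f Z = (\<Sum>x\<in>Z. f x) / real (card Z)"

definition hypergraph_system ::
  "'j set \<Rightarrow> (nat \<Rightarrow> 'j \<Rightarrow> 'v set) \<Rightarrow> nat \<Rightarrow> 'j set set \<Rightarrow> bool" where
  "hypergraph_system J V d H \<longleftrightarrow>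
     finite J \<and> (\<forall>N. \<forall>j\<in>J. finite (V N j) \<and> V N j \<noteq> {}) \<and> d \<ge> 1 \<and>
     H \<subseteq> {e. e \<subseteq> J \<and> card e = d}"

definition cube_pt :: "'j set \<Rightarrow> ('j \<Rightarrow> 'v) \<Rightarrow> ('j \<Rightarrow> 'v) \<Rightarrow> 'j set \<Rightarrow> ('j \<Rightarrow> 'v)" where
  "cube_pt e x0 x1 S = restrict (\<lambda>j. if j \<in> S then x1 j else x0 j) e"

definition dual_fn ::
  "(nat \<Rightarrow> 'j \<Rightarrow> 'v set) \<Rightarrow> nat \<Rightarrow> 'j set \<Rightarrow> (('j \<Rightarrow> 'v) \<Rightarrow> real) \<Rightarrow> ('j \<Rightarrow> 'v) \<Rightarrow> real" where
  "dual_fn V N e f x0 =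
     avg (\<lambda>x1. \<Prod>S\<in>Pow e - {{}}. f (cube_pt e x0 x1 S)) (PiE e (V N))"

definition system_of_measures ::
  "(nat \<Rightarrow> 'j \<Rightarrow> 'v set) \<Rightarrow> 'j set set \<Rightarrow> (nat \<Rightarrow> 'j set \<Rightarrow> ('j \<Rightarrow> 'v) \<Rightarrow> real) \<Rightarrow> bool" where
  "system_of_measures V H \<nu> \<longleftrightarrow>
     (\<forall>N. \<forall>e\<in>H. \<forall>x\<in>PiE e (V N). \<nu> N e x \<ge> 0) \<and>
     (\<forall>e\<in>H. (\<lambda>N. avg (\<nu> N e) (PiE e (V N))) \<longlonglongrightarrow> 1)"

definition pseudorandom ::
  "'j set \<Rightarrow> (nat \<Rightarrow> 'j \<Rightarrow> 'v set) \<Rightarrow> 'j set set \<Rightarrow> (nat \<Rightarrow> 'j set \<Rightarrow> ('j \<Rightarrow> 'v) \<Rightarrow> real) \<Rightarrow> bool" where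
  "pseudorandom J V H \<nu> \<longleftrightarrow>
     system_of_measures V H \<nu> \<and>
     \<comment> \<open>(i)\<close>
     (\<exists>C. \<forall>\<^sub>F N in sequentially. \<forall>e\<in>H. \<forall>x\<in>PiE e (V N).
          \<bar>dual_fn V N e (\<lambda>y. \<nu> N e y + 1) x\<bar> \<le> C) \<and>
     \<comment> \<open>(ii)\<close>
     (\<forall>n :: 'j set \<Rightarrow> 'j set \<Rightarrow> bool.
        (\<lambda>N. avg (\<lambda>(x0, x1). \<Prod>e\<in>H. \<Prod>S\<in>Pow e.
                    (if n e S then \<nu> N e (cube_pt e x0 x1 S) else 1))
                 (PiE J (V N) \<times> PiE J (V N))) \<longlonglongrightarrow> 1) \<and>
     \<comment> \<open>(iii)\<close>
     (\<forall>e\<in>H. \<forall>j\<in>e. \<forall>n :: 'j set \<Rightarrow> bool. \<forall>K :: nat.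
        \<exists>C. \<forall>\<^sub>F N in sequentially.
          \<bar>avg (\<lambda>(x0, x1).
              (avg (\<lambda>(y0, y1). \<Prod>S\<in>Pow e.
                    (if n S then \<nu> N e (cube_pt e (x0(j := y0)) (x1(j := y1)) S) else 1))
                 (V N j \<times> V N j)) ^ K)
             (PiE (e - {j}) (V N) \<times> PiE (e - {j}) (V N))\<bar> \<le> C)"

end

theory Submission
  imports Defs "HOL-Analysis.Analysis"
begin


lemma avg_cong: "(\<And>x. x \<in> A \<Longrightarrow> f x = g x) \<Longrightarrow> avg f A = avg g A"
  unfolding avg_def by (metis sum.cong)

lemma avg_const: "finite A \<Longrightarrow> A \<noteq> {} \<Longrightarrow> avg (\<lambda>_. c) A = c"
  unfolding avg_def by simp

lemma avg_cmult: "avg (\<lambda>x. c * f x) A = c * avg f A"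
  unfolding avg_def by (simp add: sum_distrib_left)

lemma avg_multc: "avg (\<lambda>x. f x * c) A = avg f A * c"
  unfolding avg_def by (simp add: sum_distrib_right)

lemma avg_sum: "avg (\<lambda>x. \<Sum>n\<in>S. F n x) A = (\<Sum>n\<in>S. avg (F n) A)"
  unfolding avg_def by (simp add: sum.swap[of _ S] sum_divide_distrib)

lemma avg_mono: "(\<And>x. x \<in> A \<Longrightarrow> f x \<le> g x) \<Longrightarrow> avg f A \<le> avg g A"
  unfolding avg_def by (intro divide_right_mono sum_mono) auto

lemma avg_nonneg: "(\<And>x. x \<in> A \<Longrightarrow> 0 \<le> f x) \<Longrightarrow> 0 \<le> avg f A"
  unfolding avg_def by (intro divide_nonneg_nonneg sum_nonneg) auto

lemma avg_abs: "\<bar>avg f A\<bar> \<le> avg (\<lambda>x. \<bar>f x\<bar>) A"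
  unfolding avg_def by (simp add: sum_abs divide_right_mono)

lemma avg_prod_set:
  assumes "finite A" "finite B"
  shows "avg F (A \<times> B) = avg (\<lambda>a. avg (\<lambda>b. F (a, b)) B) A"
proof (cases "B = {}")
  case True then show ?thesis by (simp add: avg_def)
next
  case False
  then have "card B > 0" using assms by auto
  then show ?thesis using assms unfolding avg_def
    by (simp add: sum.cartesian_product card_cartesian_product sum_divide_distrib[symmetric]
        field_simps)
qed

lemma avg_swap:
  assumes "finite A" "finite B"
  shows "avg (\<lambda>a. avg (\<lambda>b. F a b) B) A = avg (\<lambda>b. avg (\<lambda>a. F a b) A) B"
  unfolding avg_def by (simp add: sum_divide_distrib[symmetric] sum.swap[of _ A])

lemma avg_image: "inj_on h S \<Longrightarrow> avg F (h ` S) = avg (\<lambda>x. F (h x)) S"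
  unfolding avg_def by (simp add: sum.reindex card_image)

lemma avg_reindex: "bij_betw h A B \<Longrightarrow> avg (\<lambda>x. F (h x)) A = avg F B"
  unfolding avg_def by (simp add: sum.reindex_bij_betw bij_betw_same_card)

lemma avg_CS: "(avg (\<lambda>x. f x * g x) A)^2 \<le> avg (\<lambda>x. (f x)^2) A * avg (\<lambda>x. (g x)^2) A"
proof -
  have "(\<Sum>x\<in>A. f x * g x)^2 \<le> (\<Sum>x\<in>A. (f x)^2) * (\<Sum>x\<in>A. (g x)^2)"
    by (rule Cauchy_Schwarz_ineq_sum)
  then show ?thesis unfolding avg_def
    by (simp add: power_divide divide_right_mono power2_eq_square)
qed

lemma avg_prod_PiE:
  assumes "finite K" "finite A"
  shows "(\<Prod>k\<in>K. avg (h k) A) = avg (\<lambda>Y. \<Prod>k\<in>K. h k (Y k)) (PiE K (\<lambda>_. A))"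
  using assms unfolding avg_def
  by (simp add: prod_dividef prod_sum_PiE card_PiE)

lemma avg_PiE_insert:
  assumes "i \<notin> A"
  shows "avg F (PiE (insert i A) W) = avg (\<lambda>(c, g). F (g(i := c))) (W i \<times> PiE A W)"
proof -
  have "avg F (PiE (insert i A) W) = avg F ((\<lambda>(y, g). g(i := y)) ` (W i \<times> PiE A W))"
    by (simp add: PiE_insert_eq)
  also have "\<dots> = avg (\<lambda>x. F ((\<lambda>(y, g). g(i := y)) x)) (W i \<times> PiE A W)"
    by (rule avg_image[OF inj_combinator[OF assms]])
  finally show ?thesis by (simp add: case_prod_unfold)
qed



lemma avg_restrict_marg:
  assumes "i \<in> A" "finite A" "\<And>j. j \<in> A \<Longrightarrow> finite (W j) \<and> W j \<noteq> {}"
  shows "avg (\<lambda>x. F (restrict x (A - {i}))) (PiE A W) = avg F (PiE (A - {i}) W)"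
proof -
  have A: "A = insert i (A - {i})" using assms by auto
  have "avg (\<lambda>x. F (restrict x (A - {i}))) (PiE A W)
      = avg (\<lambda>x. F (restrict x (A - {i}))) (PiE (insert i (A - {i})) W)"
    using A by simp
  also have "\<dots> = avg (\<lambda>(c, g). F (restrict (g(i := c)) (A - {i}))) (W i \<times> PiE (A - {i}) W)"
    by (rule avg_PiE_insert) simp
  also have "\<dots> = avg (\<lambda>(c, g). F g) (W i \<times> PiE (A - {i}) W)"
  proof (rule avg_cong)
    fix x assume "x \<in> W i \<times> PiE (A - {i}) W"
    then obtain c g where x: "x = (c, g)" and g: "g \<in> PiE (A - {i}) W" by auto
    have "restrict (g(i := c)) (A - {i}) = restrict g (A - {i})"
      by (auto simp: restrict_def)
    also have "\<dots> = g" using g by simp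
    finally show "(case x of (c, g) \<Rightarrow> F (restrict (g(i := c)) (A - {i}))) = (case x of (c, g) \<Rightarrow> F g)"
      using x by simp
  qed
  also have "\<dots> = avg (\<lambda>c. avg F (PiE (A - {i}) W)) (W i)"
    using assms by (subst avg_prod_set) (auto intro!: finite_PiE)
  also have "\<dots> = avg F (PiE (A - {i}) W)"
    using assms by (intro avg_const) auto
  finally show ?thesis .
qed

lemma avg_resample:
  assumes "i \<in> A" "finite A" "\<And>j. j \<in> A \<Longrightarrow> finite (W j) \<and> W j \<noteq> {}"
  shows "avg F (PiE A W) = avg (\<lambda>Z. avg (\<lambda>c. F (Z(i := c))) (W i)) (PiE A W)"
proof -
  have fin: "finite (PiE (A - {i}) W)" using assms by (auto intro!: finite_PiE)
  have fi: "finite (W i)" using assms by auto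
  have A: "A = insert i (A - {i})" using assms by auto
  have "avg (\<lambda>Z. avg (\<lambda>c. F (Z(i := c))) (W i)) (PiE A W)
     = avg (\<lambda>Z. (\<lambda>g. avg (\<lambda>c. F (g(i := c))) (W i)) (restrict Z (A - {i}))) (PiE A W)"
  proof (rule avg_cong)
    fix Z assume Z: "Z \<in> PiE A W"
    have "\<And>c. Z(i := c) = (restrict Z (A - {i}))(i := c)"
      using Z by (auto simp: restrict_def PiE_def extensional_def fun_eq_iff)
    then show "avg (\<lambda>c. F (Z(i := c))) (W i) = (\<lambda>g. avg (\<lambda>c. F (g(i := c))) (W i)) (restrict Z (A - {i}))"
      by simp
  qed
  also have "\<dots> = avg (\<lambda>g. avg (\<lambda>c. F (g(i := c))) (W i)) (PiE (A - {i}) W)"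
    by (rule avg_restrict_marg[OF assms])
  also have "\<dots> = avg (\<lambda>c. avg (\<lambda>g. F (g(i := c))) (PiE (A - {i}) W)) (W i)"
    by (rule avg_swap[OF fin fi])
  also have "\<dots> = avg (\<lambda>(c, g). F (g(i := c))) (W i \<times> PiE (A - {i}) W)"
    by (subst avg_prod_set[OF fi fin]) simp
  also have "\<dots> = avg F (PiE (insert i (A - {i})) W)"
    by (rule avg_PiE_insert[symmetric]) simp
  finally show ?thesis using A by simp
qed

lemma avg_marg_sub:
  assumes "finite J" "e \<subseteq> J" "\<And>j. j \<in> J \<Longrightarrow> finite (W j) \<and> W j \<noteq> {}"
  shows "avg (\<lambda>x. F (restrict x e)) (PiE J W) = avg F (PiE e W)"
  using assms
proof (induction "card (J - e)" arbitrary: J)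
  case 0
  then have "J = e" by (metis Diff_eq_empty_iff card_0_eq finite_Diff subset_antisym)
  show ?case unfolding \<open>J = e\<close> by (rule avg_cong) simp
next
  case (Suc n)
  have "J - e \<noteq> {}" using Suc.hyps(2) by (metis card.empty nat.distinct(1))
  then obtain a where a: "a \<in> J" "a \<notin> e" by blast
  have eq: "(J - {a}) - e = (J - e) - {a}" by blast
  have "card ((J - e) - {a}) = card (J - e) - 1"
    using a Suc.prems(1) by (intro card_Diff_singleton) auto
  then have c: "n = card ((J - {a}) - e)" using eq Suc.hyps(2) by simp
  have "avg (\<lambda>x. F (restrict x e)) (PiE J W) = avg (\<lambda>x. (\<lambda>y. F (restrict y e)) (restrict x (J - {a}))) (PiE J W)"
  proof (rule avg_cong)
    fix x :: "'a \<Rightarrow> 'b"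
    have "restrict x e = restrict (restrict x (J - {a})) e" using a Suc.prems(2) by (auto simp: restrict_def fun_eq_iff)
    then show "F (restrict x e) = (\<lambda>y. F (restrict y e)) (restrict x (J - {a}))" by simp
  qed
  also have "\<dots> = avg (\<lambda>y. F (restrict y e)) (PiE (J - {a}) W)"
    by (rule avg_restrict_marg) (use Suc a in auto)
  also have "\<dots> = avg F (PiE e W)"
    by (rule Suc.hyps(1)[OF c]) (use Suc a in auto)
  finally show ?case .
qed



datatype 'k tg = T0 | T1 | TY 'k

fun sel :: "('v \<times> 'v \<times> ('k \<Rightarrow> 'v)) \<Rightarrow> 'k tg \<Rightarrow> 'v" where
  "sel c T0 = fst c"
| "sel c T1 = fst (snd c)"
| "sel c (TY k) = snd (snd c) k"

definition LL :: "('j \<Rightarrow> 'v set) \<Rightarrow> 'k set \<Rightarrow> 'j \<Rightarrow> ('v \<times> 'v \<times> ('k \<Rightarrow> 'v)) set" where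
  "LL W K j = W j \<times> W j \<times> PiE K (\<lambda>_. W j)"

definition pt :: "'j set \<Rightarrow> ('j \<Rightarrow> 'v \<times> 'v \<times> ('k \<Rightarrow> 'v)) \<Rightarrow> ('j \<Rightarrow> 'k tg) \<Rightarrow> ('j \<Rightarrow> 'v)" where
  "pt e Z \<sigma> = restrict (\<lambda>j. sel (Z j) (\<sigma> j)) e"

definition sg :: "'j set \<Rightarrow> 'j set \<Rightarrow> 'k tg \<Rightarrow> 'j \<Rightarrow> 'k tg" where
  "sg \<omega> S t = (\<lambda>j. if j \<in> \<omega> then T1 else if j \<in> S then t else T0)"

definition GG :: "'j set \<Rightarrow> 'k set \<Rightarrow> (('j \<Rightarrow> 'v) \<Rightarrow> real) \<Rightarrow> ('k \<Rightarrow> ('j \<Rightarrow> 'v) \<Rightarrow> real)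
   \<Rightarrow> 'j set \<Rightarrow> 'j set \<Rightarrow> ('j \<Rightarrow> 'v \<times> 'v \<times> ('k \<Rightarrow> 'v)) \<Rightarrow> real" where
  "GG e K g f P \<omega> Z = g (pt e Z (sg \<omega> {} T0)) *
      (\<Prod>k\<in>K. \<Prod>S\<in>Pow (e - P) - {{}}. f k (pt e Z (sg \<omega> S (TY k))))"

definition Phi where
  "Phi e K g f P Z = (\<Prod>\<omega>\<in>Pow P. GG e K g f P \<omega> Z)"

definition TT where
  "TT W e K g f P = avg (Phi e K g f P) (PiE e (LL W K))"

definition Aal where
  "Aal e K f P i Z = (\<Prod>\<omega>\<in>Pow P. \<Prod>k\<in>K. \<Prod>S\<in>{S\<in>Pow (e - P). i \<in> S}. f k (pt e Z (sg \<omega> S (TY k))))"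

lemma pt_upd_eq:
  assumes "sel c (\<sigma> i) = sel c' (\<sigma> i)"
  shows "pt e (Z(i := c)) \<sigma> = pt e (Z(i := c')) \<sigma>"
  using assms unfolding pt_def by (auto simp: restrict_def fun_eq_iff)

lemma pt_shift:
  assumes "i \<notin> S" "i \<notin> \<omega>" "sel c T1 = sel c' T0"
  shows "pt e (Z(i := c)) (sg (insert i \<omega>) S t) = pt e (Z(i := c')) (sg \<omega> S t)"
  using assms unfolding pt_def sg_def by (auto simp: restrict_def fun_eq_iff)

lemma avg3_split:
  assumes "finite A" "finite B" "finite C" "B \<noteq> {}"
  shows "avg (\<lambda>c. F1 (fst c) * F2 (snd (snd c))) (A \<times> B \<times> C) = avg F1 A * avg F2 C"
proof -
  have "avg (\<lambda>c. F1 (fst c) * F2 (snd (snd c))) (A \<times> B \<times> C)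
      = avg (\<lambda>a. avg (\<lambda>bc. F1 a * F2 (snd bc)) (B \<times> C)) A"
    using assms by (subst avg_prod_set) (auto)
  also have "\<dots> = avg (\<lambda>a. F1 a * avg F2 C) A"
    using assms by (intro avg_cong) (simp add: avg_prod_set avg_cmult avg_const)
  finally show ?thesis by (simp add: avg_multc)
qed

lemma avg3_01:
  assumes "finite A" "finite C" "C \<noteq> {}"
  shows "avg (\<lambda>c. F (fst c) * F (fst (snd c))) (A \<times> A \<times> C) = avg F A * avg F A"
proof -
  have "avg (\<lambda>c. F (fst c) * F (fst (snd c))) (A \<times> A \<times> C)
      = avg (\<lambda>a. avg (\<lambda>bc. F a * F (fst bc)) (A \<times> C)) A"
    using assms by (subst avg_prod_set) (auto)
  also have "\<dots> = avg (\<lambda>a. F a * avg F A) A"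
    using assms by (intro avg_cong) (simp add: avg_prod_set avg_cmult avg_const)
  finally show ?thesis by (simp add: avg_multc)
qed



lemma LL_fin:
  assumes "finite K" "finite (W j)" "W j \<noteq> {}"
  shows "finite (LL W K j)" "LL W K j \<noteq> {}"
  using assms by (auto simp: LL_def PiE_eq_empty_iff intro!: finite_PiE)

lemma step:
  assumes fin: "finite e" "finite K" and W: "\<And>j. j \<in> e \<Longrightarrow> finite (W j) \<and> W j \<noteq> {}"
    and P: "P \<subseteq> e" "i \<in> e" "i \<notin> P"
  shows "(TT W e K g f P)^2 \<le> avg (\<lambda>Z. (avg (\<lambda>c. Aal e K f P i (Z(i := c))) (LL W K i))^2) (PiE e (LL W K))
            * TT W e K g f (insert i P)"
    and "0 \<le> TT W e K g f (insert i P)"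
proof -
  let ?L = "LL W K"
  let ?P' = "insert i P"
  have Lf: "\<And>j. j \<in> e \<Longrightarrow> finite (?L j) \<and> ?L j \<noteq> {}" using W fin by (auto simp: LL_def PiE_eq_empty_iff intro!: finite_PiE)
  have Wi: "finite (W i)" "W i \<noteq> {}" using W[OF P(2)] by auto
  have PKf: "finite (PiE K (\<lambda>_. W i))" "PiE K (\<lambda>_. W i) \<noteq> {}" using Wi fin
    by (auto simp: PiE_eq_empty_iff intro!: finite_PiE)
  define SS1 where "SS1 = {S\<in>Pow (e - P). i \<in> S}"
  define SS2 where "SS2 = Pow (e - ?P') - {{}}"
  have SS: "Pow (e - P) - {{}} = SS1 \<union> SS2" "SS1 \<inter> SS2 = {}" "finite SS1" "finite SS2"
    unfolding SS1_def SS2_def using fin by auto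
  define B where "B Z = (\<Prod>\<omega>\<in>Pow P. GG e K g f ?P' \<omega> Z)" for Z
  have finPP: "finite (Pow P)" by (simp add: finite_subset[OF P(1) fin(1)])
  have split: "Phi e K g f P Z = Aal e K f P i Z * B Z" for Z
  proof -
    have "GG e K g f P \<omega> Z = (\<Prod>k\<in>K. \<Prod>S\<in>SS1. f k (pt e Z (sg \<omega> S (TY k)))) * GG e K g f ?P' \<omega> Z" for \<omega>
      unfolding GG_def SS(1) SS2_def[symmetric]
      by (simp add: prod.union_disjoint[OF SS(3) SS(4) SS(2)] prod.distrib mult_ac)
    then show ?thesis unfolding Phi_def Aal_def B_def SS1_def[symmetric] by (simp add: prod.distrib)
  qed
  have GGupd: "GG e K g f ?P' \<omega> (Z(i := c)) = GG e K g f ?P' \<omega> (Z(i := (fst c, fst c, undefined)))"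
    if "\<omega> \<in> Pow P" for \<omega> Z c
  proof -
    have io: "i \<notin> \<omega>" using that P by auto
    have *: "\<And>S t. i \<notin> S \<Longrightarrow> pt e (Z(i := c)) (sg \<omega> S t) = pt e (Z(i := (fst c, fst c, undefined))) (sg \<omega> S t)"
      by (rule pt_upd_eq) (simp add: sg_def io)
    show ?thesis unfolding GG_def
      apply (rule arg_cong2[where f="(*)"])
       apply (simp add: *)
      apply (rule prod.cong[OF refl], rule prod.cong[OF refl])
      apply (subst *)
       apply auto
      done
  qed
  have Bupd: "B (Z(i := c)) = B (Z(i := (fst c, fst c, undefined)))" for Z c
    unfolding B_def by (intro prod.cong refl GGupd)
  have Aupd: "Aal e K f P i (Z(i := c)) = Aal e K f P i (Z(i := (undefined, undefined, snd (snd c))))" for Z c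
  proof -
    have *: "\<And>\<omega> S k. \<omega> \<in> Pow P \<Longrightarrow> S \<in> {S\<in>Pow (e - P). i \<in> S} \<Longrightarrow> pt e (Z(i := c)) (sg \<omega> S (TY k)) = pt e (Z(i := (undefined, undefined, snd (snd c)))) (sg \<omega> S (TY k))"
      by (rule pt_upd_eq) (use P in \<open>auto simp: sg_def\<close>)
    show ?thesis unfolding Aal_def
      by (intro prod.cong refl) (simp add: *)
  qed
  have Pshift: "GG e K g f ?P' (insert i \<omega>) (Z(i := c)) = GG e K g f ?P' \<omega> (Z(i := (fst (snd c), fst (snd c), undefined)))"
    if "\<omega> \<in> Pow P" for \<omega> Z c
  proof -
    have io: "i \<notin> \<omega>" using that P by auto
    have *: "\<And>S t. i \<notin> S \<Longrightarrow> pt e (Z(i := c)) (sg (insert i \<omega>) S t) = pt e (Z(i := (fst (snd c), fst (snd c), undefined))) (sg \<omega> S t)"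
      by (rule pt_shift) (simp_all add: io)
    show ?thesis unfolding GG_def
      apply (rule arg_cong2[where f="(*)"])
       apply (simp add: *)
      apply (rule prod.cong[OF refl], rule prod.cong[OF refl])
      apply (subst *)
       apply auto
      done
  qed
  have Phi': "Phi e K g f ?P' (Z(i := c)) = B (Z(i := (fst c, fst c, undefined))) * B (Z(i := (fst (snd c), fst (snd c), undefined)))" for Z c
  proof -
    have PowI: "Pow ?P' = Pow P \<union> insert i ` Pow P" by (rule Pow_insert)
    have dj: "Pow P \<inter> insert i ` Pow P = {}" using P by auto
    have inj: "inj_on (insert i) (Pow P)"
    proof (rule inj_onI)
      fix A B assume AB: "A \<in> Pow P" "B \<in> Pow P" "insert i A = insert i B"
      then have "insert i A - {i} = insert i B - {i}" by simp
      moreover have "insert i A - {i} = A" "insert i B - {i} = B" using P(3) AB(1,2) by auto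
      ultimately show "A = B" by simp
    qed
    have "Phi e K g f ?P' (Z(i := c)) = (\<Prod>\<omega>\<in>Pow P. GG e K g f ?P' \<omega> (Z(i := c))) *
        (\<Prod>\<omega>\<in>insert i ` Pow P. GG e K g f ?P' \<omega> (Z(i := c)))"
      unfolding Phi_def PowI by (rule prod.union_disjoint) (use finPP dj in auto)
    also have "(\<Prod>\<omega>\<in>insert i ` Pow P. GG e K g f ?P' \<omega> (Z(i := c)))
        = (\<Prod>\<omega>\<in>Pow P. GG e K g f ?P' (insert i \<omega>) (Z(i := c)))"
      using prod.reindex[OF inj, of "\<lambda>\<omega>. GG e K g f ?P' \<omega> (Z(i := c))"] by (simp only: comp_def)
    also have "\<dots> = B (Z(i := (fst (snd c), fst (snd c), undefined)))"
      unfolding B_def by (intro prod.cong refl Pshift)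
    finally have eq1: "Phi e K g f ?P' (Z(i := c)) = B (Z(i := c)) * B (Z(i := (fst (snd c), fst (snd c), undefined)))"
      unfolding B_def .
    have eq2: "B (Z(i := c)) = B (Z(i := (fst c, fst c, undefined)))" by (rule Bupd)
    show ?thesis unfolding eq1 eq2 by (rule refl)
  qed
  define F1 where "F1 Z a = B (Z(i := (a, a, undefined)))" for Z a
  define F2 where "F2 Z b = Aal e K f P i (Z(i := (undefined, undefined, b)))" for Z b
  define al where "al Z = avg (\<lambda>c. Aal e K f P i (Z(i := c))) (?L i)" for Z
  define be where "be Z = avg (F1 Z) (W i)" for Z
  have LI: "?L i = W i \<times> W i \<times> PiE K (\<lambda>_. W i)" by (simp add: LL_def)
  have al_eq: "al Z = avg (F2 Z) (PiE K (\<lambda>_. W i))" for Z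
  proof -
    have "al Z = avg (\<lambda>c. (\<lambda>_. 1) (fst c) * F2 Z (snd (snd c))) (?L i)"
      unfolding al_def F2_def
    proof (rule avg_cong)
      fix c show "Aal e K f P i (Z(i := c)) = 1 * Aal e K f P i (Z(i := (undefined, undefined, snd (snd c))))"
        unfolding mult_1_left by (rule Aupd)
    qed
    also have "\<dots> = avg (\<lambda>_. 1) (W i) * avg (F2 Z) (PiE K (\<lambda>_. W i))"
      unfolding LI by (rule avg3_split) (use Wi PKf in auto)
    finally show ?thesis using Wi by (simp add: avg_const)
  qed
  have TP: "TT W e K g f P = avg (\<lambda>Z. al Z * be Z) (PiE e ?L)"
  proof -
    have "TT W e K g f P = avg (\<lambda>Z. avg (\<lambda>c. Phi e K g f P (Z(i := c))) (?L i)) (PiE e ?L)"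
      unfolding TT_def by (rule avg_resample) (use P fin Lf in auto)
    also have "\<dots> = avg (\<lambda>Z. al Z * be Z) (PiE e ?L)"
    proof (rule avg_cong)
      fix Z
      have "avg (\<lambda>c. Phi e K g f P (Z(i := c))) (?L i) = avg (\<lambda>c. F1 Z (fst c) * F2 Z (snd (snd c))) (?L i)"
      proof (rule avg_cong)
        fix c
        have "Aal e K f P i (Z(i := c)) = F2 Z (snd (snd c))" unfolding F2_def by (rule Aupd)
        moreover have "B (Z(i := c)) = F1 Z (fst c)" unfolding F1_def by (rule Bupd)
        ultimately show "Phi e K g f P (Z(i := c)) = F1 Z (fst c) * F2 Z (snd (snd c))"
          unfolding split by (simp only: mult.commute)
      qed
      also have "\<dots> = be Z * al Z"
        unfolding LI be_def al_eq by (rule avg3_split) (use Wi PKf in auto)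
      finally show "avg (\<lambda>c. Phi e K g f P (Z(i := c))) (?L i) = al Z * be Z" by simp
    qed
    finally show ?thesis .
  qed
  have TP': "TT W e K g f ?P' = avg (\<lambda>Z. (be Z)^2) (PiE e ?L)"
  proof -
    have "TT W e K g f ?P' = avg (\<lambda>Z. avg (\<lambda>c. Phi e K g f ?P' (Z(i := c))) (?L i)) (PiE e ?L)"
      unfolding TT_def by (rule avg_resample) (use P fin Lf in auto)
    also have "\<dots> = avg (\<lambda>Z. (be Z)^2) (PiE e ?L)"
    proof (rule avg_cong)
      fix Z
      have "avg (\<lambda>c. Phi e K g f ?P' (Z(i := c))) (?L i) = avg (\<lambda>c. F1 Z (fst c) * F1 Z (fst (snd c))) (?L i)"
        unfolding Phi' F1_def by (rule refl)
      also have "\<dots> = be Z * be Z"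
        unfolding LI be_def by (rule avg3_01) (use Wi PKf in auto)
      finally show "avg (\<lambda>c. Phi e K g f ?P' (Z(i := c))) (?L i) = (be Z)^2" by (simp add: power2_eq_square)
    qed
    finally show ?thesis .
  qed
  show "0 \<le> TT W e K g f ?P'" unfolding TP' by (intro avg_nonneg) simp
  show "(TT W e K g f P)^2 \<le> avg (\<lambda>Z. (avg (\<lambda>c. Aal e K f P i (Z(i := c))) (LL W K i))^2) (PiE e (LL W K))
            * TT W e K g f ?P'"
    unfolding TP TP' al_def[symmetric] by (rule avg_CS)
qed



lemma iter:
  assumes fin: "finite e" "finite K" and W: "\<And>j. j \<in> e \<Longrightarrow> finite (W j) \<and> W j \<noteq> {}"
    and Cw: "1 \<le> Cw" and ne: "e \<noteq> {}"
    and wt: "\<And>P i. P \<subseteq> e \<Longrightarrow> i \<in> e \<Longrightarrow> i \<notin> P \<Longrightarrow>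
       avg (\<lambda>Z. (avg (\<lambda>c. Aal e K f P i (Z(i := c))) (LL W K i))^2) (PiE e (LL W K)) \<le> Cw"
  shows "P \<subseteq> e \<Longrightarrow> \<bar>TT W e K g f P\<bar> ^ (2 ^ card (e - P)) \<le> Cw ^ (2 ^ card (e - P)) * TT W e K g f e"
proof (induction "card (e - P)" arbitrary: P)
  case 0
  then have Pe: "P = e" using fin by (metis Diff_eq_empty_iff card_0_eq finite_Diff subset_antisym)
  obtain i where i: "i \<in> e" using ne by blast
  have ee: "insert i (e - {i}) = e" using i by blast
  have "0 \<le> TT W e K g f (insert i (e - {i}))"
    by (rule step(2)[OF fin W]) (use i in auto)
  then have T0: "0 \<le> TT W e K g f e" using ee by simp
  have "\<bar>TT W e K g f e\<bar> \<le> Cw * TT W e K g f e" using T0 Cw by (simp add: mult_le_cancel_right1)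
  then show ?case using Pe by simp
next
  case (Suc n)
  have "e - P \<noteq> {}" using Suc.hyps(2) by (metis card.empty nat.distinct(1))
  then obtain i where i: "i \<in> e" "i \<notin> P" by blast
  have eq: "e - insert i P = (e - P) - {i}" by blast
  have "card ((e - P) - {i}) = card (e - P) - 1" using i fin by (intro card_Diff_singleton) auto
  then have c: "n = card (e - insert i P)" using eq Suc.hyps(2) by simp
  have sub: "insert i P \<subseteq> e" using i Suc.prems by blast
  have IH: "\<bar>TT W e K g f (insert i P)\<bar> ^ (2 ^ n) \<le> Cw ^ (2 ^ n) * TT W e K g f e"
    using Suc.hyps(1)[OF c sub] c by simp
  have st: "(TT W e K g f P)^2 \<le> avg (\<lambda>Z. (avg (\<lambda>c. Aal e K f P i (Z(i := c))) (LL W K i))^2) (PiE e (LL W K))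
            * TT W e K g f (insert i P)"
    by (rule step(1)[OF fin W Suc.prems i(1) i(2)])
  have nn: "0 \<le> TT W e K g f (insert i P)"
    by (rule step(2)[OF fin W Suc.prems i(1) i(2)])
  have "(TT W e K g f P)^2 \<le> Cw * TT W e K g f (insert i P)"
    using st wt[OF Suc.prems i(1) i(2)] nn by (meson mult_right_mono order_trans)
  then have "((TT W e K g f P)^2) ^ (2 ^ n) \<le> (Cw * TT W e K g f (insert i P)) ^ (2 ^ n)"
    by (intro power_mono) auto
  also have "\<dots> = Cw ^ (2 ^ n) * \<bar>TT W e K g f (insert i P)\<bar> ^ (2 ^ n)"
    using nn by (simp add: power_mult_distrib)
  also have "\<dots> \<le> Cw ^ (2 ^ n) * (Cw ^ (2 ^ n) * TT W e K g f e)"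
    using IH Cw by (intro mult_left_mono) auto
  finally have *: "((TT W e K g f P)^2) ^ (2 ^ n) \<le> Cw ^ (2 ^ Suc n) * TT W e K g f e"
    by (simp add: power_add mult.assoc mult_2)
  have "\<bar>TT W e K g f P\<bar> ^ (2 ^ Suc n) = ((TT W e K g f P)^2) ^ (2 ^ n)"
    by (simp add: power_mult[symmetric] mult.commute power_even_abs)
  then show ?case using * Suc.hyps(2) by simp
qed



lemma push:
  assumes "finite A"
    and hyp: "\<And>j G. j \<in> A \<Longrightarrow> avg (\<lambda>c. G (\<pi> j c)) (L j) = avg G (U j)"
    and fin: "\<And>j. j \<in> A \<Longrightarrow> finite (L j) \<and> finite (U j)"
  shows "avg (\<lambda>Z. H (restrict (\<lambda>j. \<pi> j (Z j)) A)) (PiE A L) = avg H (PiE A U)"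
  using assms
proof (induction A arbitrary: H rule: finite_induct)
  case empty
  then show ?case by (simp add: avg_def)
next
  case (insert a A)
  have fL: "finite (PiE A L)" and fU: "finite (PiE A U)" and fLa: "finite (L a)" and fUa: "finite (U a)"
    using insert.prems(2) insert.hyps(1) by (auto intro!: finite_PiE)
  have "avg (\<lambda>Z. H (restrict (\<lambda>j. \<pi> j (Z j)) (insert a A))) (PiE (insert a A) L)
      = avg (\<lambda>(c, Z). H (restrict (\<lambda>j. \<pi> j ((Z(a := c)) j)) (insert a A))) (L a \<times> PiE A L)"
    by (rule avg_PiE_insert) (rule insert.hyps)
  also have "\<dots> = avg (\<lambda>(c, Z). H ((restrict (\<lambda>j. \<pi> j (Z j)) A)(a := \<pi> a c))) (L a \<times> PiE A L)"
  proof (rule avg_cong)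
    fix x assume "x \<in> L a \<times> PiE A L"
    have "restrict (\<lambda>j. \<pi> j (((snd x)(a := fst x)) j)) (insert a A) = (restrict (\<lambda>j. \<pi> j (snd x j)) A)(a := \<pi> a (fst x))"
      using insert.hyps by (auto simp: restrict_def fun_eq_iff)
    then show "(case x of (c, Z) \<Rightarrow> H (restrict (\<lambda>j. \<pi> j ((Z(a := c)) j)) (insert a A))) =
          (case x of (c, Z) \<Rightarrow> H ((restrict (\<lambda>j. \<pi> j (Z j)) A)(a := \<pi> a c)))"
      by (simp add: case_prod_unfold)
  qed
  also have "\<dots> = avg (\<lambda>c. avg (\<lambda>Z. H ((restrict (\<lambda>j. \<pi> j (Z j)) A)(a := \<pi> a c))) (PiE A L)) (L a)"
    by (subst avg_prod_set[OF fLa fL]) simp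
  also have "\<dots> = avg (\<lambda>Z. avg (\<lambda>c. H ((restrict (\<lambda>j. \<pi> j (Z j)) A)(a := \<pi> a c))) (L a)) (PiE A L)"
    by (rule avg_swap[OF fLa fL])
  also have "\<dots> = avg (\<lambda>Z. avg (\<lambda>u. H ((restrict (\<lambda>j. \<pi> j (Z j)) A)(a := u))) (U a)) (PiE A L)"
    by (intro avg_cong) (rule insert.prems(1)[of a, where G="\<lambda>u. H (_ (a := u))"], simp)
  also have "\<dots> = avg (\<lambda>u. avg (\<lambda>Z. H ((restrict (\<lambda>j. \<pi> j (Z j)) A)(a := u))) (PiE A L)) (U a)"
    by (rule avg_swap[OF fL fUa])
  also have "\<dots> = avg (\<lambda>u. avg (\<lambda>g. H (g(a := u))) (PiE A U)) (U a)"
    by (intro avg_cong insert.IH) (use insert.prems in auto)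
  also have "\<dots> = avg (\<lambda>(u, g). H (g(a := u))) (U a \<times> PiE A U)"
    by (subst avg_prod_set[OF fUa fU]) simp
  also have "\<dots> = avg H (PiE (insert a A) U)"
    by (rule avg_PiE_insert[symmetric]) (rule insert.hyps)
  finally show ?case .
qed

lemma avg_PiE_coord:
  assumes "k \<in> K" "finite K" "finite A"
  shows "avg (\<lambda>b. G (b k)) (PiE K (\<lambda>_. A)) = avg G A"
proof -
  have KK: "K = insert k (K - {k})" using assms by auto
  have f: "finite (PiE (K - {k}) (\<lambda>_. A))" using assms by (auto intro!: finite_PiE)
  have "avg (\<lambda>b. G (b k)) (PiE K (\<lambda>_. A)) = avg (\<lambda>b. G (b k)) (PiE (insert k (K - {k})) (\<lambda>_. A))"
    using KK by simp
  also have "\<dots> = avg (\<lambda>(y, g). G ((g(k := y)) k)) (A \<times> PiE (K - {k}) (\<lambda>_. A))"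
    by (rule avg_PiE_insert) simp
  also have "\<dots> = avg (\<lambda>y. avg (\<lambda>g. G y) (PiE (K - {k}) (\<lambda>_. A))) A"
    by (subst avg_prod_set[OF assms(3) f]) simp
  also have "\<dots> = avg G A"
  proof (cases "A = {}")
    case True then show ?thesis by (simp add: avg_def)
  next
    case False
    then have "PiE (K - {k}) (\<lambda>_. A) \<noteq> {}" by (simp add: PiE_eq_empty_iff)
    then show ?thesis using f by (simp add: avg_const)
  qed
  finally show ?thesis .
qed

lemma avg_pairs_PiE:
  assumes "finite A" "\<And>j. j \<in> A \<Longrightarrow> finite (W j)"
  shows "avg (\<lambda>u. H (restrict (\<lambda>j. fst (u j)) A) (restrict (\<lambda>j. snd (u j)) A)) (PiE A (\<lambda>j. W j \<times> W j))
       = avg (\<lambda>(x0, x1). H x0 x1) (PiE A W \<times> PiE A W)"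
proof -
  have bij: "bij_betw (\<lambda>(x0, x1). restrict (\<lambda>j. (x0 j, x1 j)) A) (PiE A W \<times> PiE A W) (PiE A (\<lambda>j. W j \<times> W j))"
    by (rule bij_betw_byWitness[where f'="\<lambda>u. (restrict (\<lambda>j. fst (u j)) A, restrict (\<lambda>j. snd (u j)) A)"])
       (auto simp: PiE_iff extensional_def restrict_def fun_eq_iff mem_Times_iff)
  have "avg (\<lambda>(x0, x1). H x0 x1) (PiE A W \<times> PiE A W)
      = avg (\<lambda>p. (\<lambda>u. H (restrict (\<lambda>j. fst (u j)) A) (restrict (\<lambda>j. snd (u j)) A)) ((\<lambda>(x0, x1). restrict (\<lambda>j. (x0 j, x1 j)) A) p)) (PiE A W \<times> PiE A W)"
  proof (rule avg_cong)
    fix p assume p: "p \<in> PiE A W \<times> PiE A W"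
    obtain a b where ab: "p = (a, b)" by force
    have "restrict (\<lambda>j. fst (restrict (\<lambda>j. (a j, b j)) A j)) A = a"
         "restrict (\<lambda>j. snd (restrict (\<lambda>j. (a j, b j)) A j)) A = b"
      using p ab by (auto simp: PiE_iff extensional_def restrict_def fun_eq_iff)
    then show "(case p of (x0, x1) \<Rightarrow> H x0 x1) = (\<lambda>u. H (restrict (\<lambda>j. fst (u j)) A) (restrict (\<lambda>j. snd (u j)) A)) ((\<lambda>(x0, x1). restrict (\<lambda>j. (x0 j, x1 j)) A) p)"
      using ab by simp
  qed
  also have "\<dots> = avg (\<lambda>u. H (restrict (\<lambda>j. fst (u j)) A) (restrict (\<lambda>j. snd (u j)) A)) (PiE A (\<lambda>j. W j \<times> W j))"
    by (rule avg_reindex[OF bij])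
  finally show ?thesis by simp
qed



definition X0 :: "'j set \<Rightarrow> 'j \<Rightarrow> ('j \<Rightarrow> 'v \<times> 'v \<times> ('k \<Rightarrow> 'v)) \<Rightarrow> 'j \<Rightarrow> 'v" where
  "X0 e i Z = restrict (\<lambda>j. fst (Z j)) (e - {i})"

definition XM :: "'j set \<Rightarrow> 'j set \<Rightarrow> 'j \<Rightarrow> 'k \<Rightarrow> ('j \<Rightarrow> 'v \<times> 'v \<times> ('k \<Rightarrow> 'v)) \<Rightarrow> 'j \<Rightarrow> 'v" where
  "XM e P i k Z = restrict (\<lambda>j. if j \<in> P then fst (snd (Z j)) else snd (snd (Z j)) k) (e - {i})"

lemma M3:
  fixes W :: "'j \<Rightarrow> 'v set" and K :: "'k set"
  assumes fin: "finite e" "finite K" and k: "k \<in> K" and i: "i \<in> e"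
    and W: "\<And>j. j \<in> e \<Longrightarrow> finite (W j) \<and> W j \<noteq> {}"
  shows "avg (\<lambda>Z. H (X0 e i Z) (XM e P i k Z)) (PiE e (LL W K))
       = avg (\<lambda>(x0, x1). H x0 x1) (PiE (e - {i}) W \<times> PiE (e - {i}) W)"
proof -
  define A where "A = e - {i}"
  define \<pi> where "\<pi> j c = (fst c, if j \<in> P then fst (snd c) else snd (snd c) k)" for j and c :: "'v \<times> 'v \<times> ('k \<Rightarrow> 'v)"
  define G where "G u = H (restrict (\<lambda>j. fst (u j)) A) (restrict (\<lambda>j. snd (u j)) A)" for u
  have Lf: "\<And>j. j \<in> e \<Longrightarrow> finite (LL W K j) \<and> LL W K j \<noteq> {}"
    using W fin by (auto simp: LL_def PiE_eq_empty_iff intro!: finite_PiE)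
  have "avg (\<lambda>Z. H (X0 e i Z) (XM e P i k Z)) (PiE e (LL W K))
      = avg (\<lambda>Z. (\<lambda>Z'. G (restrict (\<lambda>j. \<pi> j (Z' j)) A)) (restrict Z (e - {i}))) (PiE e (LL W K))"
    by (intro avg_cong) (simp add: G_def X0_def XM_def \<pi>_def A_def restrict_def cong: if_cong)
  also have "\<dots> = avg (\<lambda>Z'. G (restrict (\<lambda>j. \<pi> j (Z' j)) A)) (PiE A (LL W K))"
    unfolding A_def by (rule avg_restrict_marg[OF i fin(1) Lf])
  also have "\<dots> = avg G (PiE A (\<lambda>j. W j \<times> W j))"
  proof (rule push)
    show "finite A" using fin A_def by simp
    show "\<And>j. j \<in> A \<Longrightarrow> finite (LL W K j) \<and> finite (W j \<times> W j)" using Lf W A_def by auto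
    fix j G' assume j: "j \<in> A"
    have Wj: "finite (W j)" "W j \<noteq> {}" using W j A_def by auto
    have PK: "finite (PiE K (\<lambda>_. W j))" "PiE K (\<lambda>_. W j) \<noteq> {}" using Wj fin
      by (auto simp: PiE_eq_empty_iff intro!: finite_PiE)
    have "avg (\<lambda>c. G' (\<pi> j c)) (LL W K j) = avg (\<lambda>a. avg (\<lambda>b. avg (\<lambda>y. G' (\<pi> j (a, b, y))) (PiE K (\<lambda>_. W j))) (W j)) (W j)"
      unfolding LL_def using Wj PK by (simp add: avg_prod_set)
    also have "\<dots> = avg (\<lambda>a. avg (\<lambda>b. G' (a, b)) (W j)) (W j)"
    proof (cases "j \<in> P")
      case True
      then show ?thesis using PK by (simp add: \<pi>_def avg_const)
    next
      case False
      have "avg (\<lambda>b. avg (\<lambda>y. G' (\<pi> j (a, b, y))) (PiE K (\<lambda>_. W j))) (W j) = avg (\<lambda>b. G' (a, b)) (W j)" for a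
      proof -
        have "avg (\<lambda>b. avg (\<lambda>y. G' (\<pi> j (a, b, y))) (PiE K (\<lambda>_. W j))) (W j) = avg (\<lambda>b. avg (\<lambda>t. G' (a, t)) (W j)) (W j)"
          using False avg_PiE_coord[OF k fin(2) Wj(1), of "\<lambda>t. G' (a, t)"] by (intro avg_cong) (simp add: \<pi>_def)
        also have "\<dots> = avg (\<lambda>t. G' (a, t)) (W j)" using Wj by (simp add: avg_const)
        finally show ?thesis .
      qed
      then show ?thesis by simp
    qed
    also have "\<dots> = avg G' (W j \<times> W j)" using Wj by (simp add: avg_prod_set)
    finally show "avg (\<lambda>c. G' (\<pi> j c)) (LL W K j) = avg G' (W j \<times> W j)" .
  qed
  also have "\<dots> = avg (\<lambda>(x0, x1). H x0 x1) (PiE A W \<times> PiE A W)"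
    unfolding G_def by (rule avg_pairs_PiE) (use fin W A_def in auto)
  finally show ?thesis unfolding A_def .
qed



definition cY :: "'k set \<Rightarrow> 'v \<Rightarrow> 'v \<times> 'v \<times> ('k \<Rightarrow> 'v)" where
  "cY K y = (y, y, restrict (\<lambda>_. y) K)"

definition wexp where
  "wexp W \<nu> e i nn x0 x1 = avg (\<lambda>(y0, y1). \<Prod>S\<in>Pow e. (if S \<in> nn then \<nu> (cube_pt e (x0(i := y0)) (x1(i := y1)) S) else 1)) (W i \<times> W i)"

definition ck where
  "ck W \<nu> e K P i Z k = avg (\<lambda>y. \<Prod>\<omega>\<in>Pow P. \<Prod>S\<in>{S\<in>Pow (e - P). i \<in> S}. (\<nu> (pt e (Z(i := cY K y)) (sg \<omega> S (TY k))) + 1)) (W i)"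

lemma pt_cube:
  assumes "\<omega> \<subseteq> P" "S \<subseteq> e - P" "i \<in> S" "k \<in> K"
  shows "pt e (Z(i := cY K y)) (sg \<omega> S (TY k)) = cube_pt e ((X0 e i Z)(i := y0)) ((XM e P i k Z)(i := y)) (\<omega> \<union> S)"
  using assms unfolding pt_def cube_pt_def sg_def X0_def XM_def cY_def
  by (auto simp: restrict_def fun_eq_iff)

lemma reidx:
  assumes "P \<subseteq> e" "i \<notin> P"
  shows "(\<Prod>\<omega>\<in>Pow P. \<Prod>S\<in>{S\<in>Pow (e - P). i \<in> S}. F (\<omega> \<union> S)) = (\<Prod>T\<in>{T\<in>Pow e. i \<in> T}. (F T :: real))"
proof -
  have "(\<Prod>\<omega>\<in>Pow P. \<Prod>S\<in>{S\<in>Pow (e - P). i \<in> S}. F (\<omega> \<union> S)) = (\<Prod>z\<in>Pow P \<times> {S\<in>Pow (e - P). i \<in> S}. F (fst z \<union> snd z))"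
    by (subst prod.cartesian_product) (simp add: case_prod_unfold)
  also have "\<dots> = (\<Prod>T\<in>{T\<in>Pow e. i \<in> T}. F T)"
    by (rule prod.reindex_bij_witness[where i="\<lambda>T. (T \<inter> P, T - P)" and j="\<lambda>z. fst z \<union> snd z"])
       (use assms in auto)
  finally show ?thesis .
qed

lemma pt_in:
  assumes Z: "Z \<in> PiE e (LL W K)" and i: "i \<in> e" "y \<in> W i" and k: "k \<in> K"
  shows "pt e (Z(i := cY K y)) (sg \<omega> S (TY k)) \<in> PiE e W"
proof -
  have "sel ((Z(i := cY K y)) j) (sg \<omega> S (TY k) j) \<in> W j" if j: "j \<in> e" for j
  proof (cases "j = i")
    case True then show ?thesis using i k by (auto simp: cY_def sg_def)
  next
    case False
    have "Z j \<in> W j \<times> W j \<times> PiE K (\<lambda>_. W j)" using Z j by (auto simp: LL_def)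
    then show ?thesis using False k by (auto simp: sg_def)
  qed
  then show ?thesis unfolding pt_def by simp
qed

lemma cube_in:
  assumes "x0 \<in> PiE (e - {i}) W" "x1 \<in> PiE (e - {i}) W" "y0 \<in> W i" "y1 \<in> W i"
  shows "cube_pt e (x0(i := y0)) (x1(i := y1)) S \<in> PiE e W"
  using assms unfolding cube_pt_def by (auto simp: PiE_iff)

lemma ck_eq:
  fixes W :: "'j \<Rightarrow> 'v set" and Z :: "'j \<Rightarrow> 'v \<times> 'v \<times> ('k \<Rightarrow> 'v)"
  assumes fin: "finite e" and P: "P \<subseteq> e" "i \<notin> P" and k: "k \<in> K" and Wi: "finite (W i)" "W i \<noteq> {}"
  shows "ck W \<nu> e K P i Z k = (\<Sum>nn\<in>Pow {T\<in>Pow e. i \<in> T}. wexp W \<nu> e i nn (X0 e i Z) (XM e P i k Z))"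
proof -
  let ?T = "{T\<in>Pow e. i \<in> T}"
  define Q where "Q y0 y1 = (\<Prod>T\<in>?T. \<nu> (cube_pt e ((X0 e i Z)(i := y0)) ((XM e P i k Z)(i := y1)) T) + 1)" for y0 y1
  have finT: "finite ?T" using fin by simp
  have ckQ: "ck W \<nu> e K P i Z k = avg (Q y0) (W i)" for y0
    unfolding ck_def Q_def
  proof (rule avg_cong)
    fix y
    have "(\<Prod>\<omega>\<in>Pow P. \<Prod>S\<in>{S\<in>Pow (e - P). i \<in> S}. \<nu> (pt e (Z(i := cY K y)) (sg \<omega> S (TY k))) + 1)
        = (\<Prod>\<omega>\<in>Pow P. \<Prod>S\<in>{S\<in>Pow (e - P). i \<in> S}. \<nu> (cube_pt e ((X0 e i Z)(i := y0)) ((XM e P i k Z)(i := y)) (\<omega> \<union> S)) + 1)"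
      by (intro prod.cong refl) (subst pt_cube[where P=P], use k in auto)
    also have "\<dots> = (\<Prod>T\<in>?T. \<nu> (cube_pt e ((X0 e i Z)(i := y0)) ((XM e P i k Z)(i := y)) T) + 1)"
      by (rule reidx[OF P])
    finally show "(\<Prod>\<omega>\<in>Pow P. \<Prod>S\<in>{S\<in>Pow (e - P). i \<in> S}. \<nu> (pt e (Z(i := cY K y)) (sg \<omega> S (TY k))) + 1)
        = (\<Prod>T\<in>?T. \<nu> (cube_pt e ((X0 e i Z)(i := y0)) ((XM e P i k Z)(i := y)) T) + 1)" .
  qed
  have "ck W \<nu> e K P i Z k = avg (\<lambda>y0. avg (Q y0) (W i)) (W i)"
    using ckQ Wi by (simp add: avg_const)
  also have "\<dots> = avg (\<lambda>(y0, y1). Q y0 y1) (W i \<times> W i)"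
    using Wi by (simp add: avg_prod_set)
  also have "\<dots> = avg (\<lambda>(y0, y1). \<Sum>nn\<in>Pow ?T. \<Prod>S\<in>Pow e. (if S \<in> nn then \<nu> (cube_pt e ((X0 e i Z)(i := y0)) ((XM e P i k Z)(i := y1)) S) else 1)) (W i \<times> W i)"
  proof (rule avg_cong)
    fix p :: "'v \<times> 'v" obtain y0 y1 where p: "p = (y0, y1)" by force
    let ?c = "\<lambda>S. \<nu> (cube_pt e ((X0 e i Z)(i := y0)) ((XM e P i k Z)(i := y1)) S)"
    have "Q y0 y1 = (\<Sum>nn\<in>Pow ?T. (\<Prod>T\<in>nn. ?c T) * (\<Prod>T\<in>?T - nn. 1))"
      unfolding Q_def by (rule prod_add[OF finT])
    also have "\<dots> = (\<Sum>nn\<in>Pow ?T. \<Prod>S\<in>Pow e. (if S \<in> nn then ?c S else 1))"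
    proof (rule sum.cong[OF refl])
      fix nn assume nn: "nn \<in> Pow ?T"
      have "(\<Prod>S\<in>Pow e. (if S \<in> nn then ?c S else 1)) = (\<Prod>S\<in>Pow e \<inter> {S. S \<in> nn}. ?c S) * (\<Prod>S\<in>Pow e \<inter> - {S. S \<in> nn}. 1)"
        by (rule prod.If_cases) (use fin in simp)
      also have "Pow e \<inter> {S. S \<in> nn} = nn" using nn by auto
      finally have eq: "(\<Prod>S\<in>Pow e. (if S \<in> nn then ?c S else 1)) = (\<Prod>S\<in>nn. ?c S)"
        by (simp only: prod.neutral_const mult_1_right)
      show "(\<Prod>T\<in>nn. ?c T) * (\<Prod>T\<in>?T - nn. 1) = (\<Prod>S\<in>Pow e. (if S \<in> nn then ?c S else 1))"
        by (simp only: eq prod.neutral_const mult_1_right)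
    qed
    finally show "(case p of (y0, y1) \<Rightarrow> Q y0 y1) = (case p of (y0, y1) \<Rightarrow> \<Sum>nn\<in>Pow ?T. \<Prod>S\<in>Pow e. (if S \<in> nn then \<nu> (cube_pt e ((X0 e i Z)(i := y0)) ((XM e P i k Z)(i := y1)) S) else 1))"
      using p by simp
  qed
  also have "\<dots> = (\<Sum>nn\<in>Pow ?T. wexp W \<nu> e i nn (X0 e i Z) (XM e P i k Z))"
    unfolding wexp_def by (simp add: case_prod_unfold avg_sum)
  finally show ?thesis .
qed



lemma sumpow:
  fixes x :: "'a \<Rightarrow> real"
  assumes "finite S" "S \<noteq> {}" "\<And>s. s \<in> S \<Longrightarrow> 0 \<le> x s"
  shows "(\<Sum>s\<in>S. x s) ^ p \<le> real (card S) ^ p * (\<Sum>s\<in>S. x s ^ p)"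
proof -
  define M where "M = Max (x ` S)"
  have "M \<in> x ` S" unfolding M_def using assms by (intro Max_in) auto
  then obtain s0 where s0: "s0 \<in> S" "M = x s0" by auto
  have le: "x s \<le> M" if "s \<in> S" for s unfolding M_def using assms that by auto
  have M0: "0 \<le> M" using s0 assms by auto
  have "(\<Sum>s\<in>S. x s) \<le> (\<Sum>s\<in>S. M)" by (rule sum_mono) (rule le)
  then have "(\<Sum>s\<in>S. x s) \<le> real (card S) * M" by simp
  then have "(\<Sum>s\<in>S. x s) ^ p \<le> (real (card S) * M) ^ p"
    by (intro power_mono) (auto intro!: sum_nonneg assms)
  also have "\<dots> = real (card S) ^ p * x s0 ^ p" using s0 by (simp add: power_mult_distrib)
  also have "x s0 ^ p \<le> (\<Sum>s\<in>S. x s ^ p)"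
    by (rule member_le_sum) (use assms s0 in auto)
  then have "real (card S) ^ p * x s0 ^ p \<le> real (card S) ^ p * (\<Sum>s\<in>S. x s ^ p)"
    by (intro mult_left_mono) auto
  finally show ?thesis .
qed

lemma prodsq:
  fixes x :: "'a \<Rightarrow> real"
  assumes "finite K" "\<And>k. k \<in> K \<Longrightarrow> 0 \<le> x k"
  shows "(\<Prod>k\<in>K. (x k)^2) \<le> 1 + (\<Sum>k\<in>K. x k ^ (2 * card K))"
proof (cases "K = {}")
  case True then show ?thesis by simp
next
  case False
  define M where "M = Max (x ` K)"
  have "M \<in> x ` K" unfolding M_def using assms False by (intro Max_in) auto
  then obtain s0 where s0: "s0 \<in> K" "M = x s0" by auto
  have le: "x s \<le> M" if "s \<in> K" for s unfolding M_def using assms that by auto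
  have "(\<Prod>k\<in>K. (x k)^2) \<le> (\<Prod>k\<in>K. M^2)"
    by (intro prod_mono conjI power_mono le) (auto intro: assms)
  also have "\<dots> = x s0 ^ (2 * card K)" using s0 by (simp add: power_mult)
  also have "\<dots> \<le> (\<Sum>k\<in>K. x k ^ (2 * card K))"
    by (rule member_le_sum) (use assms s0 in auto)
  finally show ?thesis by simp
qed

lemma alpha_bound:
  fixes W :: "'j \<Rightarrow> 'v set" and K :: "'k set" and Z :: "'j \<Rightarrow> 'v \<times> 'v \<times> ('k \<Rightarrow> 'v)"
  assumes fin: "finite e" "finite K" and W: "\<And>j. j \<in> e \<Longrightarrow> finite (W j) \<and> W j \<noteq> {}"
    and P: "P \<subseteq> e" "i \<in> e" "i \<notin> P" and Z: "Z \<in> PiE e (LL W K)"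
    and nu: "\<And>x. x \<in> PiE e W \<Longrightarrow> 0 \<le> \<nu> x"
    and fb: "\<And>k x. k \<in> K \<Longrightarrow> x \<in> PiE e W \<Longrightarrow> \<bar>f k x\<bar> \<le> \<nu> x + 1"
  shows "\<bar>avg (\<lambda>c. Aal e K f P i (Z(i := c))) (LL W K i)\<bar> \<le> (\<Prod>k\<in>K. ck W \<nu> e K P i Z k)"
proof -
  let ?SS = "{S\<in>Pow (e - P). i \<in> S}"
  have Wi: "finite (W i)" "W i \<noteq> {}" using W P by auto
  have PK: "finite (PiE K (\<lambda>_. W i))" "PiE K (\<lambda>_. W i) \<noteq> {}" using Wi fin
    by (auto simp: PiE_eq_empty_iff intro!: finite_PiE)
  define h where "h k y = (\<Prod>\<omega>\<in>Pow P. \<Prod>S\<in>?SS. f k (pt e (Z(i := cY K y)) (sg \<omega> S (TY k))))" for k y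
  have A: "Aal e K f P i (Z(i := c)) = (\<Prod>k\<in>K. h k (snd (snd c) k))" for c
  proof -
    have "Aal e K f P i (Z(i := c)) = (\<Prod>\<omega>\<in>Pow P. \<Prod>k\<in>K. \<Prod>S\<in>?SS. f k (pt e (Z(i := cY K (snd (snd c) k))) (sg \<omega> S (TY k))))"
      unfolding Aal_def
      by (intro prod.cong refl arg_cong[where f="f _"] pt_upd_eq) (use P in \<open>auto simp: sg_def cY_def\<close>)
    also have "\<dots> = (\<Prod>k\<in>K. h k (snd (snd c) k))"
      unfolding h_def by (rule prod.swap)
    finally show ?thesis .
  qed
  have "avg (\<lambda>c. Aal e K f P i (Z(i := c))) (LL W K i) = avg (\<lambda>c. (\<lambda>_. 1) (fst c) * (\<lambda>b. \<Prod>k\<in>K. h k (b k)) (snd (snd c))) (W i \<times> W i \<times> PiE K (\<lambda>_. W i))"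
    unfolding LL_def by (intro avg_cong) (simp add: A)
  also have "\<dots> = avg (\<lambda>_. 1) (W i) * avg (\<lambda>b. \<Prod>k\<in>K. h k (b k)) (PiE K (\<lambda>_. W i))"
    by (rule avg3_split) (use Wi PK in auto)
  also have "\<dots> = (\<Prod>k\<in>K. avg (h k) (W i))"
    using Wi by (simp add: avg_const avg_prod_PiE[OF fin(2) Wi(1)])
  finally have eq: "avg (\<lambda>c. Aal e K f P i (Z(i := c))) (LL W K i) = (\<Prod>k\<in>K. avg (h k) (W i))" .
  have "\<bar>avg (h k) (W i)\<bar> \<le> ck W \<nu> e K P i Z k" if k: "k \<in> K" for k
  proof -
    have "\<bar>avg (h k) (W i)\<bar> \<le> avg (\<lambda>y. \<bar>h k y\<bar>) (W i)" by (rule avg_abs)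
    also have "\<dots> \<le> ck W \<nu> e K P i Z k"
      unfolding ck_def
    proof (rule avg_mono)
      fix y assume y: "y \<in> W i"
      have pin: "pt e (Z(i := cY K y)) (sg \<omega> S (TY k)) \<in> PiE e W" for \<omega> S
        by (rule pt_in[OF Z P(2) y k])
      show "\<bar>h k y\<bar> \<le> (\<Prod>\<omega>\<in>Pow P. \<Prod>S\<in>?SS. \<nu> (pt e (Z(i := cY K y)) (sg \<omega> S (TY k))) + 1)"
        unfolding h_def abs_prod
        by (intro prod_mono conjI prod_nonneg abs_ge_zero fb[OF k pin] ballI)
    qed
    finally show ?thesis .
  qed
  then have "(\<Prod>k\<in>K. \<bar>avg (h k) (W i)\<bar>) \<le> (\<Prod>k\<in>K. ck W \<nu> e K P i Z k)"
    by (intro prod_mono) auto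
  then show ?thesis unfolding eq abs_prod .
qed

lemma ck_nonneg:
  fixes W :: "'j \<Rightarrow> 'v set" and K :: "'k set" and Z :: "'j \<Rightarrow> 'v \<times> 'v \<times> ('k \<Rightarrow> 'v)"
  assumes P: "i \<in> e" and Z: "Z \<in> PiE e (LL W K)" and k: "k \<in> K"
    and nu: "\<And>x. x \<in> PiE e W \<Longrightarrow> 0 \<le> \<nu> x"
  shows "0 \<le> ck W \<nu> e K P i Z k"
  unfolding ck_def
  by (intro avg_nonneg prod_nonneg) (auto intro!: add_nonneg_nonneg nu pt_in[OF Z P _ k])

lemma wexp_nonneg:
  assumes "x0 \<in> PiE (e - {i}) W" "x1 \<in> PiE (e - {i}) W"
    and nu: "\<And>x. x \<in> PiE e W \<Longrightarrow> 0 \<le> \<nu> x"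
  shows "0 \<le> wexp W \<nu> e i nn x0 x1"
  unfolding wexp_def
  by (intro avg_nonneg) (auto intro!: prod_nonneg nu cube_in[OF assms(1,2)])



lemma avg_add: "avg (\<lambda>x. f x + g x) A = avg f A + avg g A"
  unfolding avg_def by (simp add: sum.distrib add_divide_distrib)

lemma X0_in: "Z \<in> PiE e (LL W K) \<Longrightarrow> X0 e i Z \<in> PiE (e - {i}) W"
  unfolding X0_def LL_def by (auto simp: PiE_iff)

lemma XM_in: "Z \<in> PiE e (LL W K) \<Longrightarrow> k \<in> K \<Longrightarrow> XM e P i k Z \<in> PiE (e - {i}) W"
  unfolding XM_def LL_def by (auto simp: PiE_iff)

lemma weight:
  fixes W :: "'j \<Rightarrow> 'v set" and K :: "'k set"
  assumes fin: "finite e" "finite K" and W: "\<And>j. j \<in> e \<Longrightarrow> finite (W j) \<and> W j \<noteq> {}"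
    and P: "P \<subseteq> e" "i \<in> e" "i \<notin> P"
    and nu: "\<And>x. x \<in> PiE e W \<Longrightarrow> 0 \<le> \<nu> x"
    and fb: "\<And>k x. k \<in> K \<Longrightarrow> x \<in> PiE e W \<Longrightarrow> \<bar>f k x\<bar> \<le> \<nu> x + 1"
  shows "avg (\<lambda>Z. (avg (\<lambda>c. Aal e K f P i (Z(i := c))) (LL W K i))^2) (PiE e (LL W K))
     \<le> 1 + (\<Sum>k\<in>K. real (card (Pow {T\<in>Pow e. i \<in> T}))  ^ (2 * card K) *
           (\<Sum>nn\<in>Pow {T\<in>Pow e. i \<in> T}. avg (\<lambda>(x0, x1). (wexp W \<nu> e i nn x0 x1) ^ (2 * card K)) (PiE (e - {i}) W \<times> PiE (e - {i}) W)))"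
proof -
  let ?T = "Pow {T\<in>Pow e. i \<in> T}"
  let ?m = "2 * card K"
  let ?c = "real (card ?T) ^ ?m"
  have Wi: "finite (W i)" "W i \<noteq> {}" using W P by auto
  have finT: "finite ?T" "?T \<noteq> {}" using fin by auto
  have Lj: "\<And>j. j \<in> e \<Longrightarrow> finite (LL W K j) \<and> LL W K j \<noteq> {}"
    using W fin by (auto simp: LL_def PiE_eq_empty_iff intro!: finite_PiE)
  have Lf: "finite (PiE e (LL W K))" "PiE e (LL W K) \<noteq> {}"
    using Lj fin by (auto simp: PiE_eq_empty_iff intro!: finite_PiE)
  have pt: "(avg (\<lambda>c. Aal e K f P i (Z(i := c))) (LL W K i))^2
      \<le> 1 + (\<Sum>k\<in>K. ?c * (\<Sum>nn\<in>?T. (wexp W \<nu> e i nn (X0 e i Z) (XM e P i k Z)) ^ ?m))"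
    if Z: "Z \<in> PiE e (LL W K)" for Z
  proof -
    have ckn: "\<And>k. k \<in> K \<Longrightarrow> 0 \<le> ck W \<nu> e K P i Z k" by (rule ck_nonneg[OF P(2) Z]) (auto intro: nu)
    have "(avg (\<lambda>c. Aal e K f P i (Z(i := c))) (LL W K i))^2 = \<bar>avg (\<lambda>c. Aal e K f P i (Z(i := c))) (LL W K i)\<bar>^2"
      by simp
    also have "\<dots> \<le> (\<Prod>k\<in>K. ck W \<nu> e K P i Z k)^2"
      by (intro power_mono alpha_bound[OF fin W P Z nu fb]) auto
    also have "\<dots> = (\<Prod>k\<in>K. (ck W \<nu> e K P i Z k)^2)" by (simp add: prod_power_distrib)
    also have "\<dots> \<le> 1 + (\<Sum>k\<in>K. (ck W \<nu> e K P i Z k) ^ ?m)"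
      by (rule prodsq[OF fin(2) ckn])
    also have "\<dots> \<le> 1 + (\<Sum>k\<in>K. ?c * (\<Sum>nn\<in>?T. (wexp W \<nu> e i nn (X0 e i Z) (XM e P i k Z)) ^ ?m))"
    proof (intro add_left_mono sum_mono)
      fix k assume k: "k \<in> K"
      show "(ck W \<nu> e K P i Z k) ^ ?m \<le> ?c * (\<Sum>nn\<in>?T. (wexp W \<nu> e i nn (X0 e i Z) (XM e P i k Z)) ^ ?m)"
        unfolding ck_eq[where W=W and i=i, OF fin(1) P(1) P(3) k Wi]
        by (rule sumpow[OF finT]) (intro wexp_nonneg X0_in[OF Z] XM_in[OF Z k] nu)
    qed
    finally show ?thesis .
  qed
  have "avg (\<lambda>Z. (avg (\<lambda>c. Aal e K f P i (Z(i := c))) (LL W K i))^2) (PiE e (LL W K))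
      \<le> avg (\<lambda>Z. 1 + (\<Sum>k\<in>K. ?c * (\<Sum>nn\<in>?T. (wexp W \<nu> e i nn (X0 e i Z) (XM e P i k Z)) ^ ?m))) (PiE e (LL W K))"
    by (rule avg_mono) (rule pt)
  also have "\<dots> = 1 + (\<Sum>k\<in>K. ?c * (\<Sum>nn\<in>?T. avg (\<lambda>Z. (wexp W \<nu> e i nn (X0 e i Z) (XM e P i k Z)) ^ ?m) (PiE e (LL W K))))"
    using Lf by (simp add: avg_add avg_const avg_sum avg_cmult)
  also have "\<dots> = 1 + (\<Sum>k\<in>K. ?c * (\<Sum>nn\<in>?T. avg (\<lambda>(x0, x1). (wexp W \<nu> e i nn x0 x1) ^ ?m) (PiE (e - {i}) W \<times> PiE (e - {i}) W)))"
    by (intro arg_cong2[where f="(+)"] refl sum.cong arg_cong2[where f="(*)"]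
          M3[OF fin _ P(2) W, where H="\<lambda>x0 x1. (wexp W \<nu> e i _ x0 x1) ^ ?m"])
  finally show ?thesis .
qed



definition untr :: "'j set \<Rightarrow> 'k set \<Rightarrow> ('j \<Rightarrow> 'v) \<times> ('j \<Rightarrow> 'v) \<times> ('k \<Rightarrow> 'j \<Rightarrow> 'v) \<Rightarrow> 'j \<Rightarrow> 'v \<times> 'v \<times> ('k \<Rightarrow> 'v)" where
  "untr e K t = restrict (\<lambda>j. (fst t j, fst (snd t) j, restrict (\<lambda>k. snd (snd t) k j) K)) e"

lemma avg_TR:
  assumes "finite e" "finite K"
  shows "avg F (PiE e (LL W K)) = avg (\<lambda>t. F (untr e K t)) (PiE e W \<times> PiE e W \<times> PiE K (\<lambda>_. PiE e W))"
proof -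
  have bij: "bij_betw (untr e K) (PiE e W \<times> PiE e W \<times> PiE K (\<lambda>_. PiE e W)) (PiE e (LL W K))"
  proof (rule bij_betw_byWitness[where f'="\<lambda>Z. (restrict (\<lambda>j. fst (Z j)) e, restrict (\<lambda>j. fst (snd (Z j))) e,
          restrict (\<lambda>k. restrict (\<lambda>j. snd (snd (Z j)) k) e) K)"])
    show "\<forall>t\<in>PiE e W \<times> PiE e W \<times> PiE K (\<lambda>_. PiE e W).
      (restrict (\<lambda>j. fst (untr e K t j)) e, restrict (\<lambda>j. fst (snd (untr e K t j))) e,
          restrict (\<lambda>k. restrict (\<lambda>j. snd (snd (untr e K t j)) k) e) K) = t"
      by (auto simp: untr_def PiE_iff extensional_def fun_eq_iff)
    show "\<forall>Z\<in>PiE e (LL W K). untr e K (restrict (\<lambda>j. fst (Z j)) e, restrict (\<lambda>j. fst (snd (Z j))) e,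
          restrict (\<lambda>k. restrict (\<lambda>j. snd (snd (Z j)) k) e) K) = Z"
    proof
      fix Z assume Z: "Z \<in> PiE e (LL W K)"
      show "untr e K (restrict (\<lambda>j. fst (Z j)) e, restrict (\<lambda>j. fst (snd (Z j))) e,
          restrict (\<lambda>k. restrict (\<lambda>j. snd (snd (Z j)) k) e) K) = Z"
      proof (rule ext)
        fix x
        show "untr e K (restrict (\<lambda>j. fst (Z j)) e, restrict (\<lambda>j. fst (snd (Z j))) e,
          restrict (\<lambda>k. restrict (\<lambda>j. snd (snd (Z j)) k) e) K) x = Z x"
        proof (cases "x \<in> e")
          case True
          obtain a b c where Zx: "Z x = (a, b, c)" by (cases "Z x") auto
          have "Z x \<in> LL W K x" using Z True by (rule PiE_mem)
          then have "c \<in> PiE K (\<lambda>_. W x)" using Zx by (simp add: LL_def)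
          then have rc: "restrict c K = c" by (rule PiE_restrict)
          have "untr e K (restrict (\<lambda>j. fst (Z j)) e, restrict (\<lambda>j. fst (snd (Z j))) e,
            restrict (\<lambda>k. restrict (\<lambda>j. snd (snd (Z j)) k) e) K) x = (a, b, restrict c K)"
            using True Zx unfolding untr_def by (auto simp: fun_eq_iff)
          then show ?thesis unfolding rc Zx .
        next
          case False
          have u: "untr e K t x = undefined" for t unfolding untr_def using False by simp
          show ?thesis unfolding u PiE_arb[OF Z False] ..
        qed
      qed
    qed
    show "untr e K ` (PiE e W \<times> PiE e W \<times> PiE K (\<lambda>_. PiE e W)) \<subseteq> PiE e (LL W K)"
      by (auto simp: untr_def PiE_iff extensional_def LL_def)
    show "(\<lambda>Z. (restrict (\<lambda>j. fst (Z j)) e, restrict (\<lambda>j. fst (snd (Z j))) e,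
          restrict (\<lambda>k. restrict (\<lambda>j. snd (snd (Z j)) k) e) K)) ` PiE e (LL W K) \<subseteq> PiE e W \<times> PiE e W \<times> PiE K (\<lambda>_. PiE e W)"
      by (auto simp: PiE_iff extensional_def LL_def mem_Times_iff)
  qed
  show ?thesis by (rule avg_reindex[OF bij, symmetric])
qed

lemma pt_untr0:
  assumes "x0 \<in> PiE e W"
  shows "pt e (untr e K (x0, x1, Y)) (sg {} {} T0) = x0"
  using assms by (auto simp: pt_def untr_def sg_def PiE_iff extensional_def fun_eq_iff)

lemma pt_untrY:
  assumes "k \<in> K"
  shows "pt e (untr e K (x0, x1, Y)) (sg {} S (TY k)) = cube_pt e x0 (Y k) S"
  using assms by (auto simp: pt_def untr_def sg_def cube_pt_def fun_eq_iff)

lemma pt_untrE: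
  shows "pt e (untr e K (x0, x1, Y)) (sg \<omega> {} T0) = cube_pt e x0 x1 \<omega>"
  by (auto simp: pt_def untr_def sg_def cube_pt_def fun_eq_iff)

lemma stage0:
  assumes fin: "finite e" "finite K" and W: "\<And>j. j \<in> e \<Longrightarrow> finite (V N j) \<and> V N j \<noteq> {}"
  shows "TT (V N) e K g f {} = avg (\<lambda>x. g x * (\<Prod>k\<in>K. dual_fn V N e (f k) x)) (PiE e (V N))"
proof -
  let ?W = "V N"
  let ?A = "PiE e ?W"
  have fA: "finite ?A" "?A \<noteq> {}" using fin W by (auto simp: PiE_eq_empty_iff intro!: finite_PiE)
  have fY: "finite (PiE K (\<lambda>_. ?A))" "PiE K (\<lambda>_. ?A) \<noteq> {}" using fin fA by (auto simp: PiE_eq_empty_iff intro!: finite_PiE)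
  define Q where "Q k x0 y = (\<Prod>S\<in>Pow e - {{}}. f k (cube_pt e x0 y S))" for k x0 y
  have "TT ?W e K g f {} = avg (\<lambda>t. Phi e K g f {} (untr e K t)) (?A \<times> ?A \<times> PiE K (\<lambda>_. ?A))"
    unfolding TT_def by (rule avg_TR[OF fin])
  also have "\<dots> = avg (\<lambda>x0. avg (\<lambda>x1. avg (\<lambda>Y. g x0 * (\<Prod>k\<in>K. Q k x0 (Y k))) (PiE K (\<lambda>_. ?A))) ?A) ?A"
  proof -
    have "Phi e K g f {} (untr e K (x0, x1, Y)) = g x0 * (\<Prod>k\<in>K. Q k x0 (Y k))" if "x0 \<in> ?A" for x0 x1 Y
      unfolding Phi_def GG_def Q_def using that by (simp add: pt_untr0 pt_untrY cong: prod.cong)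
    then show ?thesis using fA fY by (simp add: avg_prod_set cong: avg_cong)
  qed
  also have "\<dots> = avg (\<lambda>x0. g x0 * (\<Prod>k\<in>K. avg (Q k x0) ?A)) ?A"
    using fA fY by (simp add: avg_const avg_cmult avg_prod_PiE[OF fin(2) fA(1)])
  also have "\<dots> = avg (\<lambda>x. g x * (\<Prod>k\<in>K. dual_fn V N e (f k) x)) ?A"
    unfolding dual_fn_def Q_def by simp
  finally show ?thesis .
qed

lemma stageE:
  assumes fin: "finite e" "finite K" and W: "\<And>j. j \<in> e \<Longrightarrow> finite (W j) \<and> W j \<noteq> {}"
  shows "TT W e K g f e = avg (\<lambda>(x0, x1). \<Prod>\<omega>\<in>Pow e. g (cube_pt e x0 x1 \<omega>)) (PiE e W \<times> PiE e W)"
proof -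
  let ?A = "PiE e W"
  have fA: "finite ?A" "?A \<noteq> {}" using fin W by (auto simp: PiE_eq_empty_iff intro!: finite_PiE)
  have fY: "finite (PiE K (\<lambda>_. ?A))" "PiE K (\<lambda>_. ?A) \<noteq> {}" using fin fA by (auto simp: PiE_eq_empty_iff intro!: finite_PiE)
  have "TT W e K g f e = avg (\<lambda>t. Phi e K g f e (untr e K t)) (?A \<times> ?A \<times> PiE K (\<lambda>_. ?A))"
    unfolding TT_def by (rule avg_TR[OF fin])
  also have "\<dots> = avg (\<lambda>x0. avg (\<lambda>x1. avg (\<lambda>Y. \<Prod>\<omega>\<in>Pow e. g (cube_pt e x0 x1 \<omega>)) (PiE K (\<lambda>_. ?A))) ?A) ?A"
  proof -
    have "Phi e K g f e (untr e K (x0, x1, Y)) = (\<Prod>\<omega>\<in>Pow e. g (cube_pt e x0 x1 \<omega>))" for x0 x1 Y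
      unfolding Phi_def GG_def by (simp add: pt_untrE)
    then show ?thesis using fA fY by (simp add: avg_prod_set)
  qed
  also have "\<dots> = avg (\<lambda>(x0, x1). \<Prod>\<omega>\<in>Pow e. g (cube_pt e x0 x1 \<omega>)) (?A \<times> ?A)"
    using fA fY by (simp add: avg_const avg_prod_set)
  finally show ?thesis .
qed



lemma unif_const:
  assumes "finite A" "\<forall>a\<in>A. \<exists>C. eventually (\<lambda>N. Q a N \<le> (C::real)) F"
  shows "\<exists>C. eventually (\<lambda>N. \<forall>a\<in>A. Q a N \<le> C) F"
  using assms
proof (induction A rule: finite_induct)
  case empty then show ?case by auto
next
  case (insert a A)
  obtain C1 where C1: "eventually (\<lambda>N. Q a N \<le> C1) F" using insert.prems by auto
  obtain C2 where C2: "eventually (\<lambda>N. \<forall>a\<in>A. Q a N \<le> C2) F" using insert.prems insert.IH by auto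
  have "eventually (\<lambda>N. \<forall>b\<in>insert a A. Q b N \<le> max C1 C2) F"
    using eventually_conj[OF C1 C2] by (rule eventually_mono) auto
  then show ?case by blast
qed

lemma cube_restrict: "cube_pt e x0 x1 S = cube_pt e (restrict x0 e) (restrict x1 e) S"
  unfolding cube_pt_def by (auto simp: restrict_def fun_eq_iff)

lemma avg_pair_marg:
  assumes "finite J" "e \<subseteq> J" "\<And>j. j \<in> J \<Longrightarrow> finite (W j) \<and> W j \<noteq> {}"
  shows "avg (\<lambda>(x0, x1). G (restrict x0 e) (restrict x1 e)) (PiE J W \<times> PiE J W)
       = avg (\<lambda>(x0, x1). G x0 x1) (PiE e W \<times> PiE e W)"
proof -
  have fJ: "finite (PiE J W)" using assms by (auto intro!: finite_PiE)
  have fe: "finite (PiE e W)" using assms by (intro finite_PiE) (auto intro: finite_subset)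
  have "avg (\<lambda>(x0, x1). G (restrict x0 e) (restrict x1 e)) (PiE J W \<times> PiE J W)
      = avg (\<lambda>x0. avg (\<lambda>x1. G (restrict x0 e) (restrict x1 e)) (PiE J W)) (PiE J W)"
    by (simp add: avg_prod_set[OF fJ fJ])
  also have "\<dots> = avg (\<lambda>x0. (\<lambda>y0. avg (\<lambda>x1. G y0 x1) (PiE e W)) (restrict x0 e)) (PiE J W)"
  proof (rule avg_cong)
    fix x0 :: "'a \<Rightarrow> 'b"
    show "avg (\<lambda>x1. G (restrict x0 e) (restrict x1 e)) (PiE J W) = (\<lambda>y0. avg (\<lambda>x1. G y0 x1) (PiE e W)) (restrict x0 e)"
      using avg_marg_sub[OF assms, where F="G (restrict x0 e)"] by simp
  qed
  also have "\<dots> = avg (\<lambda>y0. avg (\<lambda>x1. G y0 x1) (PiE e W)) (PiE e W)"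
    by (rule avg_marg_sub[OF assms])
  also have "\<dots> = avg (\<lambda>(x0, x1). G x0 x1) (PiE e W \<times> PiE e W)"
    by (simp add: avg_prod_set[OF fe fe])
  finally show ?thesis .
qed

lemma box_lim:
  fixes V :: "nat \<Rightarrow> 'j \<Rightarrow> 'v set" and \<nu> :: "nat \<Rightarrow> 'j set \<Rightarrow> ('j \<Rightarrow> 'v) \<Rightarrow> real"
  assumes fJ: "finite J" and VJ: "\<And>N j. j \<in> J \<Longrightarrow> finite (V N j) \<and> V N j \<noteq> {}"
    and H: "finite H" and eH: "e \<in> H" and eJ: "e \<subseteq> J"
    and ii: "\<forall>n :: 'j set \<Rightarrow> 'j set \<Rightarrow> bool.
        (\<lambda>N. avg (\<lambda>(x0, x1). \<Prod>e\<in>H. \<Prod>S\<in>Pow e.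
                    (if n e S then \<nu> N e (cube_pt e x0 x1 S) else 1))
                 (PiE J (V N) \<times> PiE J (V N))) \<longlonglongrightarrow> 1"
  shows "(\<lambda>N. avg (\<lambda>(x0, x1). \<Prod>\<omega>\<in>Pow e. (\<nu> N e (cube_pt e x0 x1 \<omega>) - 1)) (PiE e (V N) \<times> PiE e (V N))) \<longlonglongrightarrow> 0"
proof -
  have fe: "finite e" using eJ fJ finite_subset by blast
  let ?B = "\<lambda>nn N. avg (\<lambda>(x0, x1). \<Prod>S\<in>Pow e. (if S \<in> nn then \<nu> N e (cube_pt e x0 x1 S) else 1)) (PiE e (V N) \<times> PiE e (V N))"
  have Blim: "(\<lambda>N. ?B nn N) \<longlonglongrightarrow> 1" for nn
  proof -
    define n where "n e' S = (e' = e \<and> S \<in> nn)" for e' S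
    have eq: "avg (\<lambda>(x0, x1). \<Prod>e\<in>H. \<Prod>S\<in>Pow e. (if n e S then \<nu> N e (cube_pt e x0 x1 S) else 1))
                 (PiE J (V N) \<times> PiE J (V N)) = ?B nn N" for N
    proof -
      have "(\<Prod>e'\<in>H. \<Prod>S\<in>Pow e'. (if n e' S then \<nu> N e' (cube_pt e' x0 x1 S) else 1))
          = (\<Prod>S\<in>Pow e. (if S \<in> nn then \<nu> N e (cube_pt e (restrict x0 e) (restrict x1 e) S) else 1))" for x0 x1
      proof -
        have "(\<Prod>e'\<in>H. \<Prod>S\<in>Pow e'. (if n e' S then \<nu> N e' (cube_pt e' x0 x1 S) else 1))
            = (\<Prod>S\<in>Pow e. (if n e S then \<nu> N e (cube_pt e x0 x1 S) else 1)) *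
              (\<Prod>e'\<in>H - {e}. \<Prod>S\<in>Pow e'. (if n e' S then \<nu> N e' (cube_pt e' x0 x1 S) else 1))"
          by (rule prod.remove[OF H eH])
        also have "(\<Prod>e'\<in>H - {e}. \<Prod>S\<in>Pow e'. (if n e' S then \<nu> N e' (cube_pt e' x0 x1 S) else 1)) = 1"
          by (rule prod.neutral) (auto simp: n_def)
        finally have "(\<Prod>e'\<in>H. \<Prod>S\<in>Pow e'. (if n e' S then \<nu> N e' (cube_pt e' x0 x1 S) else 1))
            = (\<Prod>S\<in>Pow e. (if S \<in> nn then \<nu> N e (cube_pt e x0 x1 S) else 1))" by (simp add: n_def)
        then show ?thesis by (simp only: cube_restrict[symmetric])
      qed
      then show ?thesis
        by (simp add: case_prod_unfold avg_pair_marg[OF fJ eJ VJ,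
              where G="\<lambda>y0 y1. \<Prod>S\<in>Pow e. (if S \<in> nn then \<nu> N e (cube_pt e y0 y1 S) else 1)", simplified case_prod_unfold])
    qed
    show ?thesis using ii[rule_format, of n] unfolding eq .
  qed
  let ?T = "Pow e"
  have expand: "avg (\<lambda>(x0, x1). \<Prod>\<omega>\<in>Pow e. (\<nu> N e (cube_pt e x0 x1 \<omega>) - 1)) (PiE e (V N) \<times> PiE e (V N))
      = (\<Sum>nn\<in>Pow ?T. (-1) ^ card (?T - nn) * ?B nn N)" for N
  proof -
    have "(\<Prod>\<omega>\<in>Pow e. (\<nu> N e (cube_pt e x0 x1 \<omega>) - 1))
        = (\<Sum>nn\<in>Pow ?T. (-1) ^ card (?T - nn) * (\<Prod>S\<in>Pow e. (if S \<in> nn then \<nu> N e (cube_pt e x0 x1 S) else 1)))" for x0 x1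
    proof -
      let ?c = "\<lambda>S. \<nu> N e (cube_pt e x0 x1 S)"
      have "(\<Prod>\<omega>\<in>Pow e. (?c \<omega> - 1)) = (\<Prod>\<omega>\<in>Pow e. (?c \<omega> + (-1)))" by simp
      also have "\<dots> = (\<Sum>nn\<in>Pow ?T. (\<Prod>S\<in>nn. ?c S) * (\<Prod>S\<in>?T - nn. -1))"
        by (rule prod_add) (use fe in simp)
      also have "\<dots> = (\<Sum>nn\<in>Pow ?T. (-1) ^ card (?T - nn) * (\<Prod>S\<in>Pow e. (if S \<in> nn then ?c S else 1)))"
      proof (rule sum.cong[OF refl])
        fix nn assume nn: "nn \<in> Pow ?T"
        have "(\<Prod>S\<in>Pow e. (if S \<in> nn then ?c S else 1)) = (\<Prod>S\<in>Pow e \<inter> {S. S \<in> nn}. ?c S) * (\<Prod>S\<in>Pow e \<inter> - {S. S \<in> nn}. 1)"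
          by (rule prod.If_cases) (use fe in simp)
        also have "Pow e \<inter> {S. S \<in> nn} = nn" using nn by auto
        finally have eq: "(\<Prod>S\<in>Pow e. (if S \<in> nn then ?c S else 1)) = (\<Prod>S\<in>nn. ?c S)"
          by (simp only: prod.neutral_const mult_1_right)
        show "(\<Prod>S\<in>nn. ?c S) * (\<Prod>S\<in>?T - nn. -1) = (-1) ^ card (?T - nn) * (\<Prod>S\<in>Pow e. (if S \<in> nn then ?c S else 1))"
          by (simp only: eq prod_constant mult.commute)
      qed
      finally show ?thesis .
    qed
    then show ?thesis by (simp add: case_prod_unfold avg_sum avg_cmult)
  qed
  have "(\<lambda>N. \<Sum>nn\<in>Pow ?T. (-1) ^ card (?T - nn) * ?B nn N) \<longlonglongrightarrow> (\<Sum>nn\<in>Pow ?T. (-1) ^ card (?T - nn) * 1)"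
    by (intro tendsto_sum tendsto_mult_left Blim)
  also have "(\<Sum>nn\<in>Pow ?T. (-1) ^ card (?T - nn) * (1::real)) = 0"
  proof -
    have "(\<Sum>nn\<in>Pow ?T. (\<Prod>S\<in>nn. (1::real)) * (\<Prod>S\<in>?T - nn. -1)) = (\<Prod>S\<in>?T. 1 + (-1::real))"
      by (rule prod_add[symmetric]) (use fe in simp)
    also have "\<dots> = 0" using fe by (simp add: prod_zero_iff card_gt_0_iff) (metis Pow_bottom empty_iff)
    finally show ?thesis by simp
  qed
  finally show ?thesis unfolding expand .
qed



theorem mainTheorem11:
  fixes J :: "'j set" and V :: "nat \<Rightarrow> 'j \<Rightarrow> 'v set" and d :: nat
    and H :: "'j set set" and \<nu> :: "nat \<Rightarrow> 'j set \<Rightarrow> ('j \<Rightarrow> 'v) \<Rightarrow> real"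
    and e :: "'j set"
  assumes "hypergraph_system J V d H"
    and "pseudorandom J V H \<nu>"
    and "e \<in> H"
  shows "\<forall>m :: nat. \<forall>\<epsilon> > 0. \<forall>\<^sub>F N in sequentially.
           \<forall>(K :: 'k set) (f :: 'k \<Rightarrow> ('j \<Rightarrow> 'v) \<Rightarrow> real).
             finite K \<and> card K = m \<and>
             (\<forall>k\<in>K. \<forall>x\<in>PiE e (V N). \<bar>f k x\<bar> \<le> \<nu> N e x + 1) \<longrightarrow>
             \<bar>avg (\<lambda>x. (\<nu> N e x - 1) * (\<Prod>k\<in>K. dual_fn V N e (f k) x)) (PiE e (V N))\<bar> \<le> \<epsilon>"
proof (intro allI impI)
  fix m :: nat and \<epsilon> :: real
  assume \<epsilon>: "\<epsilon> > 0"
  have fJ: "finite J" and VJ: "\<And>N j. j \<in> J \<Longrightarrow> finite (V N j) \<and> V N j \<noteq> {}"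
    and d1: "d \<ge> 1" and HJ: "H \<subseteq> {e. e \<subseteq> J \<and> card e = d}"
    using assms(1) unfolding hypergraph_system_def by auto
  have eJ: "e \<subseteq> J" and ce: "card e = d" using HJ assms(3) by auto
  have fe: "finite e" using eJ fJ finite_subset by blast
  have ne: "e \<noteq> {}" using ce d1 by auto
  have finH: "finite H" using HJ fJ by (metis (no_types, lifting) Pow_iff finite_Pow_iff mem_Collect_eq rev_finite_subset subsetI subset_iff)
  have nu0: "\<And>N x. x \<in> PiE e (V N) \<Longrightarrow> 0 \<le> \<nu> N e x"
    using assms(2) assms(3) unfolding pseudorandom_def system_of_measures_def by blast
  have ii: "\<forall>n :: 'j set \<Rightarrow> 'j set \<Rightarrow> bool.
        (\<lambda>N. avg (\<lambda>(x0, x1). \<Prod>e\<in>H. \<Prod>S\<in>Pow e.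
                    (if n e S then \<nu> N e (cube_pt e x0 x1 S) else 1))
                 (PiE J (V N) \<times> PiE J (V N))) \<longlonglongrightarrow> 1"
    using assms(2) unfolding pseudorandom_def by blast
  have iii: "\<forall>e\<in>H. \<forall>j\<in>e. \<forall>n :: 'j set \<Rightarrow> bool. \<forall>K :: nat.
        \<exists>C. \<forall>\<^sub>F N in sequentially.
          \<bar>avg (\<lambda>(x0, x1).
              (avg (\<lambda>(y0, y1). \<Prod>S\<in>Pow e.
                    (if n S then \<nu> N e (cube_pt e (x0(j := y0)) (x1(j := y1)) S) else 1))
                 (V N j \<times> V N j)) ^ K)
             (PiE (e - {j}) (V N) \<times> PiE (e - {j}) (V N))\<bar> \<le> C"
    using assms(2) unfolding pseudorandom_def by blast
  define Q where "Q p N = \<bar>avg (\<lambda>(x0, x1). (wexp (V N) (\<nu> N e) e (fst p) (snd p) x0 x1) ^ (2 * m))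
       (PiE (e - {fst p}) (V N) \<times> PiE (e - {fst p}) (V N))\<bar>" for p N
  have "\<forall>p\<in>e \<times> Pow (Pow e). \<exists>C. eventually (\<lambda>N. Q p N \<le> C) sequentially"
  proof
    fix p assume p: "p \<in> e \<times> Pow (Pow e)"
    show "\<exists>C. eventually (\<lambda>N. Q p N \<le> C) sequentially"
      using iii[rule_format, OF assms(3), of "fst p" "\<lambda>S. S \<in> snd p" "2 * m"] p
      unfolding Q_def wexp_def by auto
  qed
  then obtain C3 where C3: "eventually (\<lambda>N. \<forall>p\<in>e \<times> Pow (Pow e). Q p N \<le> C3) sequentially"
    using unif_const[of "e \<times> Pow (Pow e)" Q sequentially] fe by auto
  define N0 where "N0 = card (Pow (Pow e))"
  define C3' where "C3' = max C3 0"
  define Cw where "Cw = 1 + real m * (real N0 ^ (2 * m) * (real N0 * C3'))"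
  have C3'0: "0 \<le> C3'" unfolding C3'_def by simp
  have Cw1: "1 \<le> Cw" unfolding Cw_def using C3'0 by simp
  define Bx where "Bx N = avg (\<lambda>(x0, x1). \<Prod>\<omega>\<in>Pow e. (\<nu> N e (cube_pt e x0 x1 \<omega>) - 1)) (PiE e (V N) \<times> PiE e (V N))" for N
  have "Bx \<longlonglongrightarrow> 0"
    unfolding Bx_def by (rule box_lim[OF fJ VJ finH assms(3) eJ ii])
  moreover have "0 < \<epsilon> ^ (2 ^ d) / Cw ^ (2 ^ d)" using \<epsilon> Cw1 by simp
  ultimately have Bsmall: "eventually (\<lambda>N. Bx N < \<epsilon> ^ (2 ^ d) / Cw ^ (2 ^ d)) sequentially"
    by (rule order_tendstoD(2))
  show "\<forall>\<^sub>F N in sequentially.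
           \<forall>(K :: 'k set) (f :: 'k \<Rightarrow> ('j \<Rightarrow> 'v) \<Rightarrow> real).
             finite K \<and> card K = m \<and>
             (\<forall>k\<in>K. \<forall>x\<in>PiE e (V N). \<bar>f k x\<bar> \<le> \<nu> N e x + 1) \<longrightarrow>
             \<bar>avg (\<lambda>x. (\<nu> N e x - 1) * (\<Prod>k\<in>K. dual_fn V N e (f k) x)) (PiE e (V N))\<bar> \<le> \<epsilon>"
    using eventually_conj[OF C3 Bsmall]
  proof (rule eventually_mono)
    fix N assume HN: "(\<forall>p\<in>e \<times> Pow (Pow e). Q p N \<le> C3) \<and> Bx N < \<epsilon> ^ (2 ^ d) / Cw ^ (2 ^ d)"
    show "\<forall>(K :: 'k set) (f :: 'k \<Rightarrow> ('j \<Rightarrow> 'v) \<Rightarrow> real).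
             finite K \<and> card K = m \<and>
             (\<forall>k\<in>K. \<forall>x\<in>PiE e (V N). \<bar>f k x\<bar> \<le> \<nu> N e x + 1) \<longrightarrow>
             \<bar>avg (\<lambda>x. (\<nu> N e x - 1) * (\<Prod>k\<in>K. dual_fn V N e (f k) x)) (PiE e (V N))\<bar> \<le> \<epsilon>"
    proof (intro allI impI)
      fix K :: "'k set" and f :: "'k \<Rightarrow> ('j \<Rightarrow> 'v) \<Rightarrow> real"
      assume A: "finite K \<and> card K = m \<and> (\<forall>k\<in>K. \<forall>x\<in>PiE e (V N). \<bar>f k x\<bar> \<le> \<nu> N e x + 1)"
      have fK: "finite K" and cK: "card K = m" and fb: "\<And>k x. k \<in> K \<Longrightarrow> x \<in> PiE e (V N) \<Longrightarrow> \<bar>f k x\<bar> \<le> \<nu> N e x + 1"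
        using A by auto
      have WE: "\<And>j. j \<in> e \<Longrightarrow> finite (V N j) \<and> V N j \<noteq> {}" using VJ eJ by blast
      have nu: "\<And>x. x \<in> PiE e (V N) \<Longrightarrow> 0 \<le> \<nu> N e x" by (rule nu0)
      define g where "g x = \<nu> N e x - 1" for x
      have wt: "avg (\<lambda>Z. (avg (\<lambda>c. Aal e K f P i (Z(i := c))) (LL (V N) K i))^2) (PiE e (LL (V N) K)) \<le> Cw"
        if P: "P \<subseteq> e" "i \<in> e" "i \<notin> P" for P i
      proof -
        let ?T = "Pow {T\<in>Pow e. i \<in> T}"
        have cardT: "card ?T \<le> N0" unfolding N0_def by (rule card_mono) (use fe in auto)
        have trm: "real (card ?T) ^ (2 * card K) *
           (\<Sum>nn\<in>?T. avg (\<lambda>(x0, x1). (wexp (V N) (\<nu> N e) e i nn x0 x1) ^ (2 * card K)) (PiE (e - {i}) (V N) \<times> PiE (e - {i}) (V N)))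
           \<le> real N0 ^ (2 * m) * (real N0 * C3')"
        proof (rule mult_mono)
          show "real (card ?T) ^ (2 * card K) \<le> real N0 ^ (2 * m)"
            unfolding cK using cardT by (intro power_mono) auto
          have each: "avg (\<lambda>(x0, x1). (wexp (V N) (\<nu> N e) e i nn x0 x1) ^ (2 * card K)) (PiE (e - {i}) (V N) \<times> PiE (e - {i}) (V N)) \<le> C3'"
            if nn: "nn \<in> ?T" for nn
          proof -
            have "(i, nn) \<in> e \<times> Pow (Pow e)" using nn P by auto
            then have "Q (i, nn) N \<le> C3" using HN by blast
            then show ?thesis unfolding Q_def C3'_def cK by simp
          qed
          have "(\<Sum>nn\<in>?T. avg (\<lambda>(x0, x1). (wexp (V N) (\<nu> N e) e i nn x0 x1) ^ (2 * card K)) (PiE (e - {i}) (V N) \<times> PiE (e - {i}) (V N)))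
              \<le> real (card ?T) * C3'"
            using sum_bounded_above[of ?T _ C3'] each by simp
          also have "\<dots> \<le> real N0 * C3'" using cardT C3'0 by (intro mult_right_mono) auto
          finally show "(\<Sum>nn\<in>?T. avg (\<lambda>(x0, x1). (wexp (V N) (\<nu> N e) e i nn x0 x1) ^ (2 * card K)) (PiE (e - {i}) (V N) \<times> PiE (e - {i}) (V N)))
              \<le> real N0 * C3'" .
          show "0 \<le> real N0 ^ (2 * m)" by simp
          show "0 \<le> (\<Sum>nn\<in>?T. avg (\<lambda>(x0, x1). (wexp (V N) (\<nu> N e) e i nn x0 x1) ^ (2 * card K)) (PiE (e - {i}) (V N) \<times> PiE (e - {i}) (V N)))"
            by (intro sum_nonneg avg_nonneg) (auto intro!: zero_le_power wexp_nonneg nu)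
        qed
        have "avg (\<lambda>Z. (avg (\<lambda>c. Aal e K f P i (Z(i := c))) (LL (V N) K i))^2) (PiE e (LL (V N) K))
           \<le> 1 + (\<Sum>k\<in>K. real (card ?T) ^ (2 * card K) *
           (\<Sum>nn\<in>?T. avg (\<lambda>(x0, x1). (wexp (V N) (\<nu> N e) e i nn x0 x1) ^ (2 * card K)) (PiE (e - {i}) (V N) \<times> PiE (e - {i}) (V N))))"
          by (rule weight[OF fe fK WE P nu fb])
        also have "\<dots> \<le> 1 + real (card K) * (real N0 ^ (2 * m) * (real N0 * C3'))"
          using trm by (simp add: mult_left_mono)
        finally show ?thesis unfolding Cw_def cK .
      qed
      have it: "\<bar>TT (V N) e K g f {}\<bar> ^ (2 ^ card (e - {})) \<le> Cw ^ (2 ^ card (e - {})) * TT (V N) e K g f e"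
        by (rule iter[OF fe fK WE Cw1 ne wt]) auto
      have T0: "TT (V N) e K g f {} = avg (\<lambda>x. (\<nu> N e x - 1) * (\<Prod>k\<in>K. dual_fn V N e (f k) x)) (PiE e (V N))"
        using stage0[where V=V and N=N and g=g and f=f, OF fe fK WE] unfolding g_def by simp
      have TE: "TT (V N) e K g f e = Bx N"
        using stageE[where W="V N" and g=g and f=f, OF fe fK WE] unfolding g_def Bx_def by simp
      let ?t = "avg (\<lambda>x. (\<nu> N e x - 1) * (\<Prod>k\<in>K. dual_fn V N e (f k) x)) (PiE e (V N))"
      have "\<bar>?t\<bar> ^ (2 ^ d) \<le> Cw ^ (2 ^ d) * Bx N" using it T0 TE ce by simp
      also have "\<dots> \<le> Cw ^ (2 ^ d) * (\<epsilon> ^ (2 ^ d) / Cw ^ (2 ^ d))"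
        using HN Cw1 by (intro mult_left_mono) auto
      also have "\<dots> = \<epsilon> ^ (2 ^ d)" using Cw1 by simp
      finally have le: "\<bar>?t\<bar> ^ (2 ^ d) \<le> \<epsilon> ^ (2 ^ d)" .
      obtain n where n: "(2::nat) ^ d = Suc n" by (metis not0_implies_Suc power_not_zero zero_neq_numeral)
      show "\<bar>?t\<bar> \<le> \<epsilon>" by (rule power_le_imp_le_base[of _ n]) (use le n \<epsilon> in auto)
    qed
  qed
qed

end
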